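(* Let $\mathcal{H}$ be a complex Hilbert space, let $T\in\mathcal{B}(\mathcal{H})$ be a $\Delta_T$-regular concave operator and let $m\ge 2$ be an integer. Then $T$ is $m$-hyperexpansive if and only if the compression $\widehat{T}=P_{\overline{\mathcal{R}(\Delta_T)}}T|_{\overline{\mathcal{R}(\Delta_T)}}$ of $T$ to $\overline{\mathcal{R}(\Delta_T)}$ is an $(m-1)$-hypercontraction.
   Context: $\Delta_T=T^*T-I$. $T$ is concave if $T^{*2}T^2-2T^*T+I\le0$, and $\Delta_T$-regular if $\Delta_TT=\Delta_T^{1/2}T\Delta_T^{1/2}$. For an operator $A$ and $n\ge1$ let $B_n(A)=\sum_{j=0}^n(-1)^j\binom{n}{j}A^{*j}A^j$. $A$ is $m$-hyperexpansive if $B_n(A)\le 0$ for all $1\le n\le m$, and an $m$-hypercontraction if $B_n(A)\ge0$ for all $1\le n\le m$. *)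

theory Defs
  imports "HOL-Analysis.Analysis" "HOL-Library.Complex_Order"
begin

text \<open>A complex Hilbert space: a (real) Banach space carrying a complex scalar
multiplication compatible with the real one, and a complex inner product
(linear in the first argument, conjugate symmetric) inducing the norm.\<close>

class complex_hilbert = banach +
  fixes hscale :: "complex \<Rightarrow> 'a \<Rightarrow> 'a"
    and hinner :: "'a \<Rightarrow> 'a \<Rightarrow> complex"
  assumes hscale_add_right: "hscale a (x + y) = hscale a x + hscale a y"
    and hscale_add_left: "hscale (a + b) x = hscale a x + hscale b x"
    and hscale_hscale: "hscale a (hscale b x) = hscale (a * b) x"
    and hscale_of_real: "hscale (complex_of_real r) x = scaleR r x"
    and hinner_sym: "hinner x y = cnj (hinner y x)"
    and hinner_add_left: "hinner (x + y) z = hinner x z + hinner y z"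
    and hinner_hscale_left: "hinner (hscale a x) y = a * hinner x y"
    and hinner_norm: "hinner x x = complex_of_real ((norm x)\<^sup>2)"

definition bounded_op :: "('a::complex_hilbert \<Rightarrow> 'a) \<Rightarrow> bool" where
  "bounded_op T \<longleftrightarrow> (\<forall>x y. T (x + y) = T x + T y) \<and> (\<forall>a x. T (hscale a x) = hscale a (T x))
      \<and> (\<exists>K. \<forall>x. norm (T x) \<le> K * norm x)"

definition closed_csubspace :: "'a::complex_hilbert set \<Rightarrow> bool" where
  "closed_csubspace M \<longleftrightarrow> closed M \<and> 0 \<in> M \<and> (\<forall>x\<in>M. \<forall>y\<in>M. x + y \<in> M)
      \<and> (\<forall>a. \<forall>x\<in>M. hscale a x \<in> M)"

text \<open>Adjoint of an operator S on a closed subspace M (viewed as a Hilbert space itself);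
outside M it is set to 0.  For M = UNIV this is the usual Hilbert space adjoint.\<close>
definition adj_on :: "'a::complex_hilbert set \<Rightarrow> ('a \<Rightarrow> 'a) \<Rightarrow> 'a \<Rightarrow> 'a" where
  "adj_on M S y = (if y \<in> M then (THE z. z \<in> M \<and> (\<forall>x\<in>M. hinner (S x) y = hinner x z)) else 0)"

abbreviation adj :: "('a::complex_hilbert \<Rightarrow> 'a) \<Rightarrow> 'a \<Rightarrow> 'a" where
  "adj S \<equiv> adj_on UNIV S"

definition Bop :: "'a::complex_hilbert set \<Rightarrow> ('a \<Rightarrow> 'a) \<Rightarrow> nat \<Rightarrow> 'a \<Rightarrow> 'a" where
  "Bop M A n x = (\<Sum>j\<le>n. hscale ((-1) ^ j * of_nat (n choose j)) ((adj_on M A ^^ j) ((A ^^ j) x)))"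

text \<open>Operator order on M: B \<le> 0 resp. B \<ge> 0 (in the ordering of complex numbers from
Complex_Order, z \<ge> 0 iff z is real and nonnegative).\<close>
definition op_nonneg_on :: "'a::complex_hilbert set \<Rightarrow> ('a \<Rightarrow> 'a) \<Rightarrow> bool" where
  "op_nonneg_on M B \<longleftrightarrow> (\<forall>x\<in>M. hinner (B x) x \<ge> 0)"

definition op_nonpos_on :: "'a::complex_hilbert set \<Rightarrow> ('a \<Rightarrow> 'a) \<Rightarrow> bool" where
  "op_nonpos_on M B \<longleftrightarrow> (\<forall>x\<in>M. hinner (B x) x \<le> 0)"

definition m_hyperexpansive :: "nat \<Rightarrow> ('a::complex_hilbert \<Rightarrow> 'a) \<Rightarrow> bool" where
  "m_hyperexpansive m A \<longleftrightarrow> (\<forall>n. 1 \<le> n \<and> n \<le> m \<longrightarrow> op_nonpos_on UNIV (Bop UNIV A n))"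

definition m_hypercontraction_on :: "'a::complex_hilbert set \<Rightarrow> nat \<Rightarrow> ('a \<Rightarrow> 'a) \<Rightarrow> bool" where
  "m_hypercontraction_on M m A \<longleftrightarrow> (\<forall>n. 1 \<le> n \<and> n \<le> m \<longrightarrow> op_nonneg_on M (Bop M A n))"

definition Delta :: "('a::complex_hilbert \<Rightarrow> 'a) \<Rightarrow> 'a \<Rightarrow> 'a" where
  "Delta T x = adj T (T x) - x"

definition op_sqrt :: "('a::complex_hilbert \<Rightarrow> 'a) \<Rightarrow> 'a \<Rightarrow> 'a" where
  "op_sqrt A = (THE B. bounded_op B \<and> op_nonneg_on UNIV B \<and> (\<forall>x. B (B x) = A x))"

definition concave_op :: "('a::complex_hilbert \<Rightarrow> 'a) \<Rightarrow> bool" where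
  "concave_op T \<longleftrightarrow>
     op_nonpos_on UNIV (\<lambda>x. (adj T ^^ 2) ((T ^^ 2) x) - hscale 2 (adj T (T x)) + x)"

definition Delta_regular :: "('a::complex_hilbert \<Rightarrow> 'a) \<Rightarrow> bool" where
  "Delta_regular T \<longleftrightarrow>
     (\<forall>x. Delta T (T x) = op_sqrt (Delta T) (T (op_sqrt (Delta T) x)))"

definition proj :: "'a::complex_hilbert set \<Rightarrow> 'a \<Rightarrow> 'a" where
  "proj M x = (THE p. p \<in> M \<and> (\<forall>y\<in>M. hinner (x - p) y = 0))"

definition compression :: "'a::complex_hilbert set \<Rightarrow> ('a \<Rightarrow> 'a) \<Rightarrow> 'a \<Rightarrow> 'a" where
  "compression M T x = (if x \<in> M then proj M (T x) else 0)"

end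

theory Submission
  imports Defs
begin
lemma hscale_zero_left[simp]: "hscale 0 (x::'a::complex_hilbert) = 0"
  using hscale_of_real[of 0 x] by simp
lemma hscale_one[simp]: "hscale 1 (x::'a::complex_hilbert) = x"
  using hscale_of_real[of 1 x] by simp
lemma hscale_zero_right[simp]: "hscale a (0::'a::complex_hilbert) = 0"
proof -
  have "hscale a 0 + hscale a 0 = hscale a (0::'a) + 0" using hscale_add_right[of a 0 0] by simp
  then show ?thesis by (rule add_left_imp_eq)
qed
lemma hscale_minus_right: "hscale a (- (x::'a::complex_hilbert)) = - hscale a x"
proof -
  have "hscale a x + hscale a (-x) = 0" by (simp flip: hscale_add_right)
  then show ?thesis by (simp add: add_eq_0_iff2)
qed
lemma hscale_diff_right: "hscale a ((x::'a::complex_hilbert) - y) = hscale a x - hscale a y"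
  unfolding diff_conv_add_uminus by (simp only: hscale_add_right hscale_minus_right)
lemma hscale_minus_left: "hscale (-a) (x::'a::complex_hilbert) = - hscale a x"
proof -
  have "hscale a x + hscale (-a) x = 0" by (simp flip: hscale_add_left)
  then show ?thesis by (simp add: add_eq_0_iff2)
qed
lemma hscale_diff_left: "hscale (a - b) (x::'a::complex_hilbert) = hscale a x - hscale b x"
  unfolding diff_conv_add_uminus by (simp only: hscale_add_left hscale_minus_left)
lemma hscale_scaleR: "hscale a (scaleR r (x::'a::complex_hilbert)) = scaleR r (hscale a x)"
  by (metis hscale_hscale hscale_of_real mult.commute)
lemma hscale_sum: "hscale a (sum f A) = sum (\<lambda>i. hscale a (f i :: 'a::complex_hilbert)) A"
  by (induction A rule: infinite_finite_induct) (auto simp: hscale_add_right)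
lemma hscale_neg1: "hscale (-1) (x::'a::complex_hilbert) = - x"
  by (simp add: hscale_minus_left)

lemma hinner_zero_left[simp]: "hinner 0 (y::'a::complex_hilbert) = 0"
proof -
  have "hinner 0 y + hinner 0 y = hinner (0::'a) y + 0" using hinner_add_left[of 0 0 y] by simp
  then show ?thesis by (rule add_left_imp_eq)
qed
lemma hinner_zero_right[simp]: "hinner (y::'a::complex_hilbert) 0 = 0"
  by (subst hinner_sym) simp
lemma hinner_add_right: "hinner (x::'a::complex_hilbert) (y + z) = hinner x y + hinner x z"
  by (metis complex_cnj_add hinner_add_left hinner_sym)
lemma hinner_hscale_right: "hinner (x::'a::complex_hilbert) (hscale a y) = cnj a * hinner x y"
  by (metis complex_cnj_cnj complex_cnj_mult hinner_hscale_left hinner_sym)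
lemma hinner_minus_left: "hinner (- x::'a::complex_hilbert) y = - hinner x y"
proof -
  have "hinner x y + hinner (-x) y = 0" by (simp flip: hinner_add_left)
  then show ?thesis by (simp add: add_eq_0_iff2)
qed
lemma hinner_minus_right: "hinner (x::'a::complex_hilbert) (- y) = - hinner x y"
proof -
  have "hinner x y + hinner x (-y) = 0" by (simp flip: hinner_add_right)
  then show ?thesis by (simp add: add_eq_0_iff2)
qed
lemma hinner_diff_left: "hinner (x - z::'a::complex_hilbert) y = hinner x y - hinner z y"
  unfolding diff_conv_add_uminus by (simp only: hinner_add_left hinner_minus_left)
lemma hinner_diff_right: "hinner (x::'a::complex_hilbert) (y - z) = hinner x y - hinner x z"
  unfolding diff_conv_add_uminus by (simp only: hinner_add_right hinner_minus_right)
lemma hinner_scaleR_left: "hinner (scaleR r x::'a::complex_hilbert) y = of_real r * hinner x y"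
  by (metis hinner_hscale_left hscale_of_real)
lemma hinner_scaleR_right: "hinner (x::'a::complex_hilbert) (scaleR r y) = of_real r * hinner x y"
  by (metis complex_cnj_complex_of_real hinner_hscale_right hscale_of_real)
lemma hinner_sum_left: "hinner (sum f A) (y::'a::complex_hilbert) = (\<Sum>i\<in>A. hinner (f i) y)"
  by (induction A rule: infinite_finite_induct) (auto simp: hinner_add_left)
lemma hinner_self_real: "hinner (x::'a::complex_hilbert) x = of_real ((norm x)^2)"
  by (rule hinner_norm)
lemma Re_hinner_self: "Re (hinner (x::'a::complex_hilbert) x) = (norm x)^2"
  by (simp add: hinner_norm)
lemma Im_hinner_self: "Im (hinner (x::'a::complex_hilbert) x) = 0"
  by (simp add: hinner_norm)
lemma hinner_self_eq_0: "hinner (x::'a::complex_hilbert) x = 0 \<longleftrightarrow> x = 0"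
  by (simp add: hinner_norm)
lemma hinner_eq_all: "(\<And>z. hinner z (x::'a::complex_hilbert) = hinner z y) \<Longrightarrow> x = y"
  by (metis eq_iff_diff_eq_0 hinner_diff_right hinner_self_eq_0)
lemma hinner_eq_all_left: "(\<And>z. hinner (x::'a::complex_hilbert) z = hinner y z) \<Longrightarrow> x = y"
  by (metis eq_iff_diff_eq_0 hinner_diff_left hinner_self_eq_0)

lemma norm_hscale: "norm (hscale a (x::'a::complex_hilbert)) = cmod a * norm x"
proof -
  have "complex_of_real ((norm (hscale a x))^2) = a * cnj a * complex_of_real ((norm x)^2)"
    by (metis hinner_hscale_left hinner_hscale_right hinner_norm mult.assoc)
  also have "a * cnj a = complex_of_real ((cmod a)^2)" by (rule complex_norm_square[symmetric])
  finally have "(norm (hscale a x))^2 = (cmod a * norm x)^2"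
    by (metis of_real_eq_iff of_real_mult power_mult_distrib)
  then show ?thesis by (simp add: power2_eq_iff_nonneg)
qed

lemma quad_real_lemma:
  fixes A B C :: real
  assumes "\<And>s. 0 \<le> A - 2 * s * C + s^2 * C * B" "C \<ge> 0" "B \<ge> 0"
  shows "C \<le> A * B"
proof (cases "B = 0")
  case True
  have "C = 0"
  proof (rule ccontr)
    assume "C \<noteq> 0" then have "C > 0" using assms(2) by simp
    have "0 \<le> A - 2 * ((\<bar>A\<bar> + 1) / (2*C)) * C" using assms(1)[of "(\<bar>A\<bar> + 1) / (2*C)"] True by simp
    also have "\<dots> = A - (\<bar>A\<bar> + 1)" using \<open>C > 0\<close> by (simp add: field_simps)
    finally show False by linarith
  qed
  then show ?thesis using True by simp
next
  case False
  then have "B > 0" using assms(3) by simp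
  have "0 \<le> A - 2 * (1/B) * C + (1/B)^2 * C * B" by (rule assms(1))
  also have "\<dots> = A - C / B" using \<open>B > 0\<close> by (simp add: field_simps power2_eq_square)
  finally show ?thesis using \<open>B > 0\<close> by (simp add: field_simps)
qed

lemma mult_cnj_cmod: "c * cnj c = (complex_of_real (cmod c))^2"
  by (metis complex_norm_square of_real_power)
lemma cnj_mult_cmod: "cnj c * c = (complex_of_real (cmod c))^2"
  by (metis complex_norm_square of_real_power mult.commute)

lemma gen_cs:
  fixes f :: "'a::complex_hilbert \<Rightarrow> 'a \<Rightarrow> complex"
  assumes add: "\<And>x y z. f (x+y) z = f x z + f y z"
    and sc: "\<And>a x y. f (hscale a x) y = a * f x y"
    and sym: "\<And>x y. f x y = cnj (f y x)"
    and pos: "\<And>x. Re (f x x) \<ge> 0"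
  shows "(cmod (f x y))^2 \<le> Re (f x x) * Re (f y y)"
proof -
  have addr: "f x (y + z) = f x y + f x z" for x y z
  proof -
    have "f x (y+z) = cnj (f (y+z) x)" by (rule sym)
    also have "\<dots> = cnj (f y x) + cnj (f z x)" by (simp add: add)
    finally show ?thesis using sym[of x y] sym[of x z] by simp
  qed
  have scr: "f x (hscale a y) = cnj a * f x y" for a x y
  proof -
    have "f x (hscale a y) = cnj (f (hscale a y) x)" by (rule sym)
    also have "\<dots> = cnj a * cnj (f y x)" by (simp add: sc)
    finally show ?thesis using sym[of x y] by simp
  qed
  define c where "c = f x y"
  have fyx: "f y x = cnj c" unfolding c_def by (rule sym)
  have key: "0 \<le> Re (f x x) - 2 * s * (cmod c)^2 + s^2 * (cmod c)^2 * Re (f y y)" for s :: real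
  proof -
    define t where "t = - (of_real s * c)"
    have ex: "f (x + hscale t y) (x + hscale t y) = f x x + cnj t * f x y + t * f y x + t * cnj t * f y y"
      by (simp only: add addr sc scr) (simp add: algebra_simps)
    have e1: "cnj t * f x y = - of_real (s * (cmod c)^2)"
      unfolding t_def c_def[symmetric] by (simp add: cnj_mult_cmod mult_cnj_cmod)
    have e2: "t * f y x = - of_real (s * (cmod c)^2)"
      unfolding t_def fyx by (simp add: cnj_mult_cmod mult_cnj_cmod)
    have e3: "t * cnj t = of_real (s^2 * (cmod c)^2)"
      unfolding t_def by (simp add: power_mult_distrib flip: mult_cnj_cmod) (simp add: algebra_simps power2_eq_square)
    have "Re (f (x + hscale t y) (x + hscale t y)) = Re (f x x) + (- 2 * s * (cmod c)^2 + s^2 * (cmod c)^2 * Re (f y y))"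
      unfolding ex e1 e2 e3 by simp
    with pos[of "x + hscale t y"] show ?thesis by simp
  qed
  have "(cmod c)^2 \<le> Re (f x x) * Re (f y y)"
    by (rule quad_real_lemma) (use key pos in auto)
  then show ?thesis by (simp add: c_def)
qed

lemma hinner_cs: "cmod (hinner (x::'a::complex_hilbert) y) \<le> norm x * norm y"
proof -
  have "(cmod (hinner x y))^2 \<le> Re (hinner x x) * Re (hinner y y)"
    by (rule gen_cs) (auto simp: hinner_add_left hinner_hscale_left intro: hinner_sym simp: Re_hinner_self)
  also have "\<dots> = (norm x * norm y)^2" by (simp add: Re_hinner_self power_mult_distrib)
  finally show ?thesis by (simp add: power2_le_iff_abs_le)
qed

definition clin :: "('a::complex_hilbert \<Rightarrow> 'a) \<Rightarrow> bool" where
  "clin B \<longleftrightarrow> (\<forall>x y. B (x + y) = B x + B y) \<and> (\<forall>a x. B (hscale a x) = hscale a (B x))"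

lemma clinD: assumes "clin B" shows "B (x + y) = B x + B y" "B (hscale a x) = hscale a (B x)"
  using assms by (auto simp: clin_def)

lemma clin_scaleR: "clin B \<Longrightarrow> B (scaleR r x) = scaleR r (B x)"
  by (metis clinD(2) hscale_of_real)
lemma clin_zero: "clin B \<Longrightarrow> B 0 = 0"
  by (metis clinD(2) hscale_zero_left)
lemma clin_minus: "clin B \<Longrightarrow> B (- x) = - B x"
  by (metis clinD(2) hscale_neg1)
lemma clin_diff: "clin B \<Longrightarrow> B (x - y) = B x - B y"
  by (metis clinD(1) clin_minus diff_conv_add_uminus)
lemma clin_sum: "clin B \<Longrightarrow> B (sum f A) = (\<Sum>i\<in>A. B (f i))"
  by (induction A rule: infinite_finite_induct) (auto simp: clin_zero clinD)
lemma bounded_op_clin: "bounded_op B \<Longrightarrow> clin B"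
  by (simp add: bounded_op_def clin_def)

lemma nonneg_selfadj:
  fixes B :: "'a::complex_hilbert \<Rightarrow> 'a"
  assumes "clin B" "op_nonneg_on UNIV B"
  shows "hinner (B x) y = hinner x (B y)"
proof -
  have r: "Im (hinner (B u) u) = 0" for u using assms(2) by (auto simp: op_nonneg_on_def less_eq_complex_def)
  let ?a = "hinner (B x) y" and ?b = "hinner (B y) x"
  have "hinner (B (x+y)) (x+y) = hinner (B x) x + ?a + ?b + hinner (B y) y"
    by (simp add: clinD[OF assms(1)] hinner_add_left hinner_add_right)
  then have i1: "Im ?a + Im ?b = 0" using r[of "x+y"] r[of x] r[of y] by simp
  have "hinner (B (x + hscale \<i> y)) (x + hscale \<i> y) = hinner (B x) x - \<i> * ?a + \<i> * ?b + hinner (B y) y"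
    by (simp add: clinD[OF assms(1)] hinner_add_left hinner_add_right hinner_hscale_left hinner_hscale_right algebra_simps)
  then have i2: "Re ?b - Re ?a = 0" using r[of "x + hscale \<i> y"] r[of x] r[of y] by simp
  have "?a = cnj ?b" using i1 i2 by (simp add: complex_eq_iff)
  then show ?thesis using hinner_sym[of x "B y"] by simp
qed

lemma nonneg_cs:
  fixes B :: "'a::complex_hilbert \<Rightarrow> 'a"
  assumes "clin B" "op_nonneg_on UNIV B"
  shows "(cmod (hinner (B x) y))^2 \<le> Re (hinner (B x) x) * Re (hinner (B y) y)"
proof (rule gen_cs[where f="\<lambda>x y. hinner (B x) y"])
  show "hinner (B (x + y)) z = hinner (B x) z + hinner (B y) z" for x y z
    by (simp add: clinD[OF assms(1)] hinner_add_left)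
  show "hinner (B (hscale a x)) y = a * hinner (B x) y" for a x y
    by (simp add: clinD[OF assms(1)] hinner_hscale_left)
  show "hinner (B x) y = cnj (hinner (B y) x)" for x y
    using nonneg_selfadj[OF assms, of x y] hinner_sym[of x "B y"] by simp
  show "0 \<le> Re (hinner (B x) x)" for x using assms(2) by (auto simp: op_nonneg_on_def less_eq_complex_def)
qed

lemma nonneg_zero:
  fixes B :: "'a::complex_hilbert \<Rightarrow> 'a"
  assumes "clin B" "op_nonneg_on UNIV B" "Re (hinner (B x) x) = 0"
  shows "B x = 0"
proof -
  have "(cmod (hinner (B x) (B x)))^2 \<le> 0" using nonneg_cs[OF assms(1,2), of x "B x"] assms(3) by simp
  then have "hinner (B x) (B x) = 0" by simp
  then show ?thesis by (simp add: hinner_self_eq_0)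
qed

lemma nonneg_le_id_norm:
  fixes B :: "'a::complex_hilbert \<Rightarrow> 'a"
  assumes "clin B" "op_nonneg_on UNIV B" "\<And>x. Re (hinner (B x) x) \<le> (norm x)^2"
  shows "norm (B x) \<le> norm x"
proof -
  have "(cmod (hinner (B x) (B x)))^2 \<le> Re (hinner (B x) x) * Re (hinner (B (B x)) (B x))"
    by (rule nonneg_cs[OF assms(1,2)])
  also have "\<dots> \<le> (norm x)^2 * (norm (B x))^2"
    using assms(2) by (intro mult_mono assms(3)) (auto simp: op_nonneg_on_def less_eq_complex_def)
  finally have c: "(cmod (hinner (B x) (B x)))^2 \<le> (norm x)^2 * (norm (B x))^2" .
  have e: "cmod (hinner (B x) (B x)) = (norm (B x))^2" by (simp add: hinner_norm norm_power)
  have "(norm (B x))^2 * (norm (B x))^2 \<le> (norm x)^2 * (norm (B x))^2"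
    using c unfolding e by (simp add: power2_eq_square)
  show ?thesis
  proof (cases "norm (B x) = 0")
    case False
    then have "(norm (B x))^2 > 0" by simp
    with \<open>(norm (B x))^2 * (norm (B x))^2 \<le> (norm x)^2 * (norm (B x))^2\<close>
    have "(norm (B x))^2 \<le> (norm x)^2" by (rule mult_right_le_imp_le)
    then show ?thesis by (rule power2_le_imp_le) simp
  qed simp
qed

lemma bounded_bilinear_hinner: "bounded_bilinear (hinner :: 'a::complex_hilbert \<Rightarrow> 'a \<Rightarrow> complex)"
proof
  show "hinner (a + a') b = hinner a b + hinner a' b" for a a' b :: 'a by (rule hinner_add_left)
  show "hinner a (b + b') = hinner a b + hinner a b'" for a b b' :: 'a by (rule hinner_add_right)
  show "hinner (r *\<^sub>R a) b = r *\<^sub>R hinner a b" for r and a b :: 'a by (simp add: hinner_scaleR_left scaleR_conv_of_real)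
  show "hinner a (r *\<^sub>R b) = r *\<^sub>R hinner a b" for r and a b :: 'a by (simp add: hinner_scaleR_right scaleR_conv_of_real)
  show "\<exists>K. \<forall>a b::'a. norm (hinner a b) \<le> norm a * norm b * K"
    by (rule exI[of _ 1]) (simp add: hinner_cs)
qed

lemmas tendsto_hinner = bounded_bilinear.tendsto[OF bounded_bilinear_hinner]
lemmas continuous_on_hinner = bounded_bilinear.continuous_on[OF bounded_bilinear_hinner]

lemma bounded_linear_hscale: "bounded_linear (hscale a :: 'a::complex_hilbert \<Rightarrow> 'a)"
  by (rule bounded_linear_intro[where K="cmod a"]) (auto simp: hscale_add_right hscale_scaleR norm_hscale)

lemma bounded_op_bounded_linear:
  assumes "bounded_op (B :: 'a::complex_hilbert \<Rightarrow> 'a)" shows "bounded_linear B"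
proof -
  obtain K where K: "\<And>x. norm (B x) \<le> K * norm x" using assms by (auto simp: bounded_op_def)
  show ?thesis
    by (rule bounded_linear_intro[where K=K]) (use bounded_op_clin[OF assms] K in \<open>auto simp: clinD clin_scaleR mult.commute\<close>)
qed

lemma bounded_opI:
  assumes "clin B" "\<And>x. norm (B x) \<le> K * norm x" shows "bounded_op B"
  using assms by (auto simp: bounded_op_def clin_def)

lemma parallelogram:
  "(norm ((a::'a::complex_hilbert) + b))^2 + (norm (a - b))^2 = 2 * (norm a)^2 + 2 * (norm b)^2"
proof -
  have "hinner (a+b) (a+b) + hinner (a-b) (a-b) = 2 * hinner a a + 2 * hinner b b"
    by (simp add: hinner_add_left hinner_add_right hinner_diff_left hinner_diff_right)
  then have "Re (hinner (a+b) (a+b) + hinner (a-b) (a-b)) = Re (2 * hinner a a + 2 * hinner b b)" by simp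
  then show ?thesis by (simp only: Re_hinner_self plus_complex.sel) (simp add: Re_hinner_self)
qed

lemma closed_csubspace_diff: "closed_csubspace M \<Longrightarrow> x \<in> M \<Longrightarrow> y \<in> M \<Longrightarrow> x - y \<in> M"
  unfolding closed_csubspace_def by (metis diff_conv_add_uminus hscale_neg1)
lemma closed_csubspace_scaleR: "closed_csubspace M \<Longrightarrow> x \<in> M \<Longrightarrow> scaleR r x \<in> M"
  unfolding closed_csubspace_def by (metis hscale_of_real)

lemma expand_sub_scale:
  "hinner (u - hscale t y) (u - hscale t (y::'a::complex_hilbert)) =
     hinner u u - cnj t * hinner u y - t * hinner y u + t * cnj t * hinner y y"
  by (simp add: hinner_diff_left hinner_diff_right hinner_hscale_left hinner_hscale_right algebra_simps)

lemma orth_from_min: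
  fixes u y :: "'a::complex_hilbert"
  assumes "\<And>t. (norm u)^2 \<le> (norm (u - hscale t y))^2"
  shows "hinner u y = 0"
proof (cases "y = 0")
  case False
  define c where "c = hinner u y"
  define n where "n = (norm y)^2"
  have n: "n > 0" using False by (simp add: n_def)
  define t where "t = c / of_real n"
  have hyu: "hinner y u = cnj c" by (simp add: c_def hinner_sym[of y u])
  have hyy: "hinner y y = of_real n" by (simp add: n_def hinner_norm)
  have "hinner (u - hscale t y) (u - hscale t y) = hinner u u - of_real ((cmod c)^2 / n)"
    unfolding expand_sub_scale c_def[symmetric] hyu hyy t_def using n
    by (simp add: field_simps mult_cnj_cmod cnj_mult_cmod power2_eq_square)
  then have "(norm (u - hscale t y))^2 = (norm u)^2 - (cmod c)^2 / n"
    by (metis Re_complex_of_real Re_hinner_self minus_complex.sel)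
  with assms[of t] have "(cmod c)^2 / n \<le> 0" by simp
  then have "(cmod c)^2 \<le> 0" using n by (simp add: divide_le_0_iff)
  then show ?thesis by (simp add: c_def)
qed simp

lemma proj_exists:
  fixes M :: "'a::complex_hilbert set"
  assumes M: "closed_csubspace M"
  shows "\<exists>p\<in>M. \<forall>y\<in>M. hinner (x - p) y = 0"
proof -
  define D where "D = (\<lambda>m. (norm (x - m))^2) ` M"
  define d where "d = Inf D"
  have M0: "0 \<in> M" using M by (simp add: closed_csubspace_def)
  have Dne: "D \<noteq> {}" using M0 by (auto simp: D_def)
  have Dbd: "bdd_below D" by (auto simp: D_def intro!: bdd_belowI[of _ 0])
  have dle: "d \<le> (norm (x - m))^2" if "m \<in> M" for m
    unfolding d_def D_def using Dbd that by (auto simp: D_def intro!: cInf_lower)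
  have "\<exists>m\<in>M. (norm (x - m))^2 < d + 1 / (Suc n)" for n
  proof -
    have "Inf D < d + 1 / Suc n" by (simp add: d_def)
    then obtain e where "e \<in> D" "e < d + 1 / Suc n" using cInf_lessD[OF Dne] by blast
    then show ?thesis by (auto simp: D_def)
  qed
  then obtain m where mM: "\<And>n. m n \<in> M" and mle: "\<And>n. (norm (x - m n))^2 < d + 1 / Suc n"
    by metis
  have par: "(norm (m i - m j))^2 \<le> 2 / Suc i + 2 / Suc j" for i j
  proof -
    have mid: "scaleR (1/2) (m i + m j) \<in> M"
      using M mM by (auto simp: closed_csubspace_def intro: closed_csubspace_scaleR)
    have "(norm ((x - m i) + (x - m j)))^2 + (norm ((x - m i) - (x - m j)))^2
          = 2 * (norm (x - m i))^2 + 2 * (norm (x - m j))^2" by (rule parallelogram)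
    moreover have "(x - m i) + (x - m j) = scaleR 2 (x - scaleR (1/2) (m i + m j))"
      by (simp add: algebra_simps scaleR_2)
    moreover have "(x - m i) - (x - m j) = m j - m i" by simp
    moreover have "norm (m j - m i) = norm (m i - m j)" by (rule norm_minus_commute)
    ultimately have "4 * (norm (x - scaleR (1/2) (m i + m j)))^2 + (norm (m i - m j))^2
          = 2 * (norm (x - m i))^2 + 2 * (norm (x - m j))^2"
      by (simp add: power_mult_distrib)
    moreover have "d \<le> (norm (x - scaleR (1/2) (m i + m j)))^2" by (rule dle[OF mid])
    ultimately show ?thesis using mle[of i] mle[of j] by linarith
  qed
  have "Cauchy m"
  proof (rule CauchyI)
    fix e :: real assume "e > 0"
    obtain N :: nat where N: "4 / e^2 < N" using reals_Archimedean2 by blast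
    show "\<exists>N. \<forall>i\<ge>N. \<forall>j\<ge>N. norm (m i - m j) < e"
    proof (intro exI allI impI)
      fix i j assume ij: "N \<le> i" "N \<le> j"
      have "2 / Suc i \<le> 2 / Suc N" "2 / Suc j \<le> 2 / Suc N" using ij by (auto simp: field_simps)
      then have "(norm (m i - m j))^2 \<le> 4 / Suc N" using par[of i j] by simp
      also have "4 / Suc N < e^2" using N \<open>e > 0\<close> by (simp add: field_simps) (smt (verit) zero_less_power)
      finally show "norm (m i - m j) < e" using \<open>e > 0\<close> by (simp add: power_less_imp_less_base)
    qed
  qed
  then obtain p where p: "m \<longlonglongrightarrow> p" by (auto simp: Cauchy_convergent_iff convergent_def)
  have pM: "p \<in> M" using closed_sequentially[OF _ mM p] M by (simp add: closed_csubspace_def)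
  have lim1: "(\<lambda>n. (norm (x - m n))^2) \<longlonglongrightarrow> (norm (x - p))^2"
    by (intro tendsto_intros p)
  have lim2: "(\<lambda>n. d + 1 / Suc n) \<longlonglongrightarrow> d + 0"
    by (intro tendsto_intros) (rule LIMSEQ_Suc[OF lim_inverse_n'])
  have pmin: "(norm (x - p))^2 \<le> d" using LIMSEQ_le[OF lim1 lim2] mle by (auto intro: less_imp_le)
  show ?thesis
  proof (intro bexI[OF _ pM] ballI)
    fix y assume "y \<in> M"
    show "hinner (x - p) y = 0"
    proof (rule orth_from_min)
      fix t
      have "p + hscale t y \<in> M" using M pM \<open>y \<in> M\<close> by (auto simp: closed_csubspace_def)
      then have "d \<le> (norm (x - (p + hscale t y)))^2" by (rule dle)
      then show "(norm (x - p))^2 \<le> (norm (x - p - hscale t y))^2" using pmin by (simp only: diff_diff_eq)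
    qed
  qed
qed

lemma proj_unique:
  fixes M :: "'a::complex_hilbert set"
  assumes M: "closed_csubspace M" and "p \<in> M" "\<forall>y\<in>M. hinner (x - p) y = 0"
    and "q \<in> M" "\<forall>y\<in>M. hinner (x - q) y = 0"
  shows "p = q"
proof -
  have "p - q \<in> M" using assms closed_csubspace_diff by blast
  then have "hinner (x - q) (p - q) - hinner (x - p) (p - q) = 0" using assms by simp
  then have "hinner (p - q) (p - q) = 0" by (simp add: hinner_diff_left[symmetric])
  then show ?thesis by (simp add: hinner_self_eq_0)
qed

lemma proj_char:
  fixes M :: "'a::complex_hilbert set"
  assumes M: "closed_csubspace M"
  shows "proj M x \<in> M" "\<And>y. y \<in> M \<Longrightarrow> hinner (x - proj M x) y = 0"
proof -
  have ex: "\<exists>!p. p \<in> M \<and> (\<forall>y\<in>M. hinner (x - p) y = 0)"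
    using proj_exists[OF M, of x] proj_unique[OF M] by blast
  have "proj M x \<in> M \<and> (\<forall>y\<in>M. hinner (x - proj M x) y = 0)"
    unfolding proj_def by (rule theI'[OF ex])
  then show "proj M x \<in> M" "\<And>y. y \<in> M \<Longrightarrow> hinner (x - proj M x) y = 0" by auto
qed

lemma proj_eqI:
  fixes M :: "'a::complex_hilbert set"
  assumes M: "closed_csubspace M" and "p \<in> M" "\<And>y. y \<in> M \<Longrightarrow> hinner (x - p) y = 0"
  shows "proj M x = p"
  using proj_unique[OF M proj_char(1)[OF M] _ assms(2)] proj_char(2)[OF M] assms(3) by blast

lemma closure_csubspace:
  fixes S :: "'a::complex_hilbert set"
  assumes "0 \<in> S" "\<And>x y. x \<in> S \<Longrightarrow> y \<in> S \<Longrightarrow> x + y \<in> S" "\<And>a x. x \<in> S \<Longrightarrow> hscale a x \<in> S"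
  shows "closed_csubspace (closure S)"
  unfolding closed_csubspace_def
proof (intro conjI ballI allI)
  show "closed (closure S)" by simp
  show "0 \<in> closure S" using assms(1) closure_subset by blast
  fix x y assume x: "x \<in> closure S" and y: "y \<in> closure S"
  obtain u where u: "\<And>n. u n \<in> S" "u \<longlonglongrightarrow> x"
    using closure_sequential[THEN iffD1, OF x] by blast
  obtain v where v: "\<And>n. v n \<in> S" "v \<longlonglongrightarrow> y"
    using closure_sequential[THEN iffD1, OF y] by blast
  have "(\<lambda>n. u n + v n) \<longlonglongrightarrow> x + y" by (intro tendsto_intros u v)
  then show "x + y \<in> closure S" unfolding closure_sequential
    by (intro exI[of _ "\<lambda>n. u n + v n"]) (use u v assms(2) in auto)
next
  fix a x assume x: "x \<in> closure S"
  obtain u where u: "\<And>n. u n \<in> S" "u \<longlonglongrightarrow> x"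
    using closure_sequential[THEN iffD1, OF x] by blast
  have "(\<lambda>n. hscale a (u n)) \<longlonglongrightarrow> hscale a x" by (rule bounded_linear.tendsto[OF bounded_linear_hscale u(2)])
  then show "hscale a x \<in> closure S" unfolding closure_sequential
    by (intro exI[of _ "\<lambda>n. hscale a (u n)"]) (use u assms(3) in auto)
qed

lemma closed_csubspace_range_closure:
  assumes "clin (B::'a::complex_hilbert \<Rightarrow> 'a)"
  shows "closed_csubspace (closure (range B))"
proof (rule closure_csubspace)
  have "B 0 \<in> range B" by (rule rangeI)
  then show "0 \<in> range B" by (simp only: clin_zero[OF assms])
  show "x + y \<in> range B" if xy: "x \<in> range B" "y \<in> range B" for x y
  proof -
    obtain u v where "x = B u" "y = B v" using xy by blast
    then have "x + y = B (u + v)" by (simp add: clinD[OF assms])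
    then show ?thesis by simp
  qed
  show "hscale a x \<in> range B" if xr: "x \<in> range B" for a x
  proof -
    obtain u where "x = B u" using xr by blast
    then have "hscale a x = B (hscale a u)" by (simp add: clinD[OF assms])
    then show ?thesis by simp
  qed
qed

lemma riesz:
  fixes f :: "'a::complex_hilbert \<Rightarrow> complex"
  assumes add: "\<And>x y. f (x + y) = f x + f y" and sc: "\<And>a x. f (hscale a x) = a * f x"
    and bd: "\<And>x. cmod (f x) \<le> K * norm x"
  shows "\<exists>z. \<forall>x. f x = hinner x z"
proof (cases "\<forall>x. f x = 0")
  case True then show ?thesis by (auto intro: exI[of _ 0])
next
  case False
  then obtain u where u: "f u \<noteq> 0" by blast
  have bl: "bounded_linear f"
    by (rule bounded_linear_intro[where K=K]) (auto simp: add bd mult.commute scaleR_conv_of_real simp flip: hscale_of_real sc)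
  define N where "N = {x. f x = 0}"
  have f0: "f 0 = 0" using sc[of 0 0] by simp
  have N: "closed_csubspace N"
    unfolding closed_csubspace_def N_def
  proof (intro conjI ballI allI)
    show "closed {x. f x = 0}"
      by (rule closed_Collect_eq) (auto intro: linear_continuous_on bl continuous_on_const)
  qed (auto simp: add sc f0)
  define w where "w = u - proj N u"
  have fp: "f (proj N u) = 0" using proj_char(1)[OF N] by (simp add: N_def)
  have fw: "f w \<noteq> 0" unfolding w_def using add[of "u - proj N u" "proj N u"] fp u by simp
  have wN: "hinner w y = 0" if "y \<in> N" for y using proj_char(2)[OF N that] by (simp add: w_def)
  have ww: "hinner w w \<noteq> 0" using fw f0 by (auto simp: hinner_self_eq_0)
  define z where "z = hscale (cnj (f w / hinner w w)) w"
  show ?thesis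
  proof (intro exI allI)
    fix x
    define v where "v = x - hscale (f x / f w) w"
    have "f v = 0" unfolding v_def using add[of "x - hscale (f x / f w) w" "hscale (f x / f w) w"] sc fw by simp
    then have "hinner w v = 0" by (intro wN) (simp add: N_def)
    then have "hinner v w = 0" using hinner_sym[of v w] by simp
    then have "hinner x w = (f x / f w) * hinner w w"
      unfolding v_def by (simp add: hinner_diff_left hinner_hscale_left)
    then show "f x = hinner x z" unfolding z_def using fw ww by (simp add: hinner_hscale_right)
  qed
qed

lemma adj_on_eqI:
  fixes A S :: "'a::complex_hilbert \<Rightarrow> 'a"
  assumes M: "closed_csubspace M" and S: "\<And>y. y \<in> M \<Longrightarrow> S y \<in> M"
    and h: "\<And>x y. x \<in> M \<Longrightarrow> y \<in> M \<Longrightarrow> hinner (A x) y = hinner x (S y)"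
    and y: "y \<in> M"
  shows "adj_on M A y = S y"
proof -
  have "(THE z. z \<in> M \<and> (\<forall>x\<in>M. hinner (A x) y = hinner x z)) = S y"
  proof (rule the_equality)
    show "S y \<in> M \<and> (\<forall>x\<in>M. hinner (A x) y = hinner x (S y))" using S h y by auto
    fix z assume z: "z \<in> M \<and> (\<forall>x\<in>M. hinner (A x) y = hinner x z)"
    have "z - S y \<in> M" using closed_csubspace_diff[OF M] z S y by auto
    then have "hinner (z - S y) z - hinner (z - S y) (S y) = 0" using z h[OF _ y] by auto
    then have "hinner (z - S y) (z - S y) = 0" by (simp add: hinner_diff_right)
    then show "z = S y" by (simp add: hinner_self_eq_0)
  qed
  then show ?thesis using y by (simp add: adj_on_def)
qed

lemma closed_csubspace_UNIV: "closed_csubspace (UNIV :: 'a::complex_hilbert set)"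
  by (simp add: closed_csubspace_def)

lemma adj_eqI:
  fixes A S :: "'a::complex_hilbert \<Rightarrow> 'a"
  assumes h: "\<And>x y. hinner (A x) y = hinner x (S y)"
  shows "adj A = S"
proof
  fix y show "adj A y = S y"
    by (rule adj_on_eqI[OF closed_csubspace_UNIV]) (auto simp: h)
qed

lemma adj_exists:
  fixes T :: "'a::complex_hilbert \<Rightarrow> 'a"
  assumes T: "bounded_op T"
  shows "\<exists>S. \<forall>x y. hinner (T x) y = hinner x (S y)"
proof -
  obtain K where K: "\<And>x. norm (T x) \<le> K * norm x" using T by (auto simp: bounded_op_def)
  have "\<exists>z. \<forall>x. hinner (T x) y = hinner x z" for y
  proof (rule riesz[where K="K * norm y"])
    show "hinner (T (x + x')) y = hinner (T x) y + hinner (T x') y" for x x'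
      by (simp add: clinD[OF bounded_op_clin[OF T]] hinner_add_left)
    show "hinner (T (hscale a x)) y = a * hinner (T x) y" for a x
      by (simp add: clinD[OF bounded_op_clin[OF T]] hinner_hscale_left)
    show "cmod (hinner (T x) y) \<le> K * norm y * norm x" for x
    proof -
      have "cmod (hinner (T x) y) \<le> norm (T x) * norm y" by (rule hinner_cs)
      also have "\<dots> \<le> K * norm x * norm y" by (rule mult_right_mono[OF K]) simp
      finally show ?thesis by (simp add: ac_simps)
    qed
  qed
  then have "\<forall>y. \<exists>z. \<forall>x. hinner (T x) y = hinner x z" by blast
  from choice[OF this] obtain S where "\<forall>y x. hinner (T x) y = hinner x (S y)" by blast
  then show ?thesis by blast
qed

lemma adj_char:
  fixes T :: "'a::complex_hilbert \<Rightarrow> 'a"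
  assumes T: "bounded_op T"
  shows "hinner (T x) y = hinner x (adj T y)"
proof -
  obtain S where S: "\<And>x y. hinner (T x) y = hinner x (S y)" using adj_exists[OF T] by blast
  show ?thesis using adj_eqI[OF S] S by simp
qed

lemma adj_char2:
  fixes T :: "'a::complex_hilbert \<Rightarrow> 'a"
  assumes T: "bounded_op T"
  shows "hinner (adj T x) y = hinner x (T y)"
  using adj_char[OF T, of y x] hinner_sym[of "adj T x" y] hinner_sym[of x "T y"] by simp

lemma bounded_op_K:
  assumes "bounded_op (T::'a::complex_hilbert \<Rightarrow> 'a)"
  obtains K where "K \<ge> 0" "\<And>x. norm (T x) \<le> K * norm x"
proof -
  obtain K where K: "\<And>x. norm (T x) \<le> K * norm x" using assms by (auto simp: bounded_op_def)
  have "norm (T x) \<le> max K 0 * norm x" for x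
    using K[of x] by (smt (verit) mult_right_mono norm_ge_zero)
  then show ?thesis using that[of "max K 0"] by simp
qed

lemma adj_bounded:
  fixes T :: "'a::complex_hilbert \<Rightarrow> 'a"
  assumes T: "bounded_op T"
  shows "bounded_op (adj T)"
proof -
  obtain K where K: "\<And>x. norm (T x) \<le> K * norm x" and "K \<ge> 0" using bounded_op_K[OF T] by blast
  have cl: "clin (adj T)"
    unfolding clin_def
  proof (intro conjI allI)
    fix x y show "adj T (x + y) = adj T x + adj T y"
    proof (rule hinner_eq_all)
      fix z show "hinner z (adj T (x + y)) = hinner z (adj T x + adj T y)"
        unfolding hinner_add_right adj_char[OF T, symmetric] by (rule refl)
    qed
  next
    fix a x show "adj T (hscale a x) = hscale a (adj T x)"
    proof (rule hinner_eq_all)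
      fix z show "hinner z (adj T (hscale a x)) = hinner z (hscale a (adj T x))"
        unfolding hinner_hscale_right adj_char[OF T, symmetric] by (rule refl)
    qed
  qed
  show ?thesis
  proof (rule bounded_opI[OF cl])
    fix y
    have "(norm (adj T y))^2 = Re (hinner (T (adj T y)) y)" by (simp add: adj_char[OF T] Re_hinner_self)
    also have "\<dots> \<le> cmod (hinner (T (adj T y)) y)" by (rule complex_Re_le_cmod)
    also have "\<dots> \<le> norm (T (adj T y)) * norm y" by (rule hinner_cs)
    also have "\<dots> \<le> K * norm (adj T y) * norm y" by (rule mult_right_mono[OF K]) simp
    finally have "norm (adj T y) * norm (adj T y) \<le> (K * norm y) * norm (adj T y)"
      by (simp add: power2_eq_square ac_simps)
    then show "norm (adj T y) \<le> K * norm y"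
      by (cases "norm (adj T y) = 0") (use \<open>K \<ge> 0\<close> in \<open>auto simp: mult_le_cancel_right\<close>)
  qed
qed

lemma adj_funpow:
  fixes T :: "'a::complex_hilbert \<Rightarrow> 'a"
  assumes T: "bounded_op T"
  shows "hinner ((adj T ^^ j) u) v = hinner u ((T ^^ j) v)"
proof (induction j arbitrary: v)
  case (Suc j)
  have "hinner ((adj T ^^ Suc j) u) v = hinner ((adj T ^^ j) u) (T v)"
    by (simp add: adj_char2[OF T])
  also have "\<dots> = hinner u ((T ^^ j) (T v))" by (rule Suc)
  also have "\<dots> = hinner u ((T ^^ Suc j) v)" by (simp add: funpow_Suc_right del: funpow.simps)
  finally show ?case .
qed simp

lemma proj_id: "closed_csubspace M \<Longrightarrow> x \<in> M \<Longrightarrow> proj M x = x"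
  by (rule proj_eqI) auto

lemma proj_in: "closed_csubspace M \<Longrightarrow> proj M x \<in> M"
  by (rule proj_char(1))

lemma proj_hinner_left: "closed_csubspace M \<Longrightarrow> y \<in> M \<Longrightarrow> hinner (proj M x) y = hinner x y"
  using proj_char(2)[of M y x] by (simp add: hinner_diff_left)

lemma proj_hinner_right: "closed_csubspace M \<Longrightarrow> x \<in> M \<Longrightarrow> hinner x (proj M y) = hinner x y"
proof -
  assume "closed_csubspace M" "x \<in> M"
  then have "hinner (proj M y) x = hinner y x" by (rule proj_hinner_left)
  then show ?thesis using hinner_sym[of x "proj M y"] hinner_sym[of x y] by simp
qed

lemma proj_clin: assumes M: "closed_csubspace M" shows "clin (proj M)"
  unfolding clin_def
proof (intro conjI allI)
  fix x y
  show "proj M (x + y) = proj M x + proj M y"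
  proof (rule proj_eqI[OF M])
    show "proj M x + proj M y \<in> M" using M proj_in[OF M] by (auto simp: closed_csubspace_def)
    fix z assume z: "z \<in> M"
    have "x + y - (proj M x + proj M y) = (x - proj M x) + (y - proj M y)" by simp
    then show "hinner (x + y - (proj M x + proj M y)) z = 0"
      using proj_char(2)[OF M z] by (simp only: hinner_add_left) simp
  qed
next
  fix a x
  show "proj M (hscale a x) = hscale a (proj M x)"
    by (rule proj_eqI[OF M]) (use M proj_in[OF M] proj_char(2)[OF M] in \<open>auto simp: closed_csubspace_def hinner_hscale_left simp flip: hscale_diff_right\<close>)
qed

lemma proj_norm: assumes M: "closed_csubspace M" shows "norm (proj M x) \<le> norm x"
proof -
  have o: "hinner (x - proj M x) (proj M x) = 0" by (rule proj_char(2)[OF M proj_in[OF M]])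
  have "hinner x x = hinner (x - proj M x) (x - proj M x) + hinner (proj M x) (proj M x)"
    using o hinner_sym[of "proj M x" "x - proj M x"]
    by (simp add: hinner_diff_left hinner_diff_right)
  then have "(norm x)^2 = (norm (x - proj M x))^2 + (norm (proj M x))^2"
    by (metis Re_hinner_self plus_complex.sel(1))
  then have "(norm (proj M x))^2 \<le> (norm x)^2" by simp
  then show ?thesis by (rule power2_le_imp_le) simp
qed

lemma proj_bounded: "closed_csubspace M \<Longrightarrow> bounded_op (proj M)"
  by (rule bounded_opI[where K=1]) (auto simp: proj_clin proj_norm)

lemma nonneg_iff: "(z::complex) \<ge> 0 \<longleftrightarrow> Re z \<ge> 0 \<and> Im z = 0"
  by (simp add: less_eq_complex_def)

lemma hinner_self_nonneg: "hinner (x::'a::complex_hilbert) x \<ge> 0"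
  by (simp only: nonneg_iff Re_hinner_self Im_hinner_self) simp

lemma funpow_clin: "clin C \<Longrightarrow> clin (C ^^ k)"
proof (induction k)
  case 0 then show ?case by (simp add: clin_def)
next
  case (Suc k) then show ?case by (simp add: clin_def)
qed

lemma funpow_comm: "(\<And>x. G (C x) = C (G x)) \<Longrightarrow> G ((C ^^ k) x) = (C ^^ k) (G x)"
  by (induction k) auto

locale sqctx =
  fixes C :: "'a::complex_hilbert \<Rightarrow> 'a"
  assumes C_clin: "clin C"
    and C_sa: "\<And>x y. hinner (C x) y = hinner x (C y)"
    and C_nn: "op_nonneg_on UNIV C"
begin

inductive_set NP :: "('a \<Rightarrow> 'a) set" where
  np_mon: "r \<ge> 0 \<Longrightarrow> (\<lambda>x. scaleR r ((C ^^ k) x)) \<in> NP"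
| np_add: "f \<in> NP \<Longrightarrow> g \<in> NP \<Longrightarrow> (\<lambda>x. f x + g x) \<in> NP"

lemma NP_cong: assumes "f \<in> NP" "\<And>x. f x = g x" shows "g \<in> NP"
proof -
  have "f = g" by (rule ext) (rule assms(2))
  then show "g \<in> NP" using assms(1) by simp
qed

lemma Ck_clin: "clin (C ^^ k)" by (rule funpow_clin[OF C_clin])

lemma NP_clin: "f \<in> NP \<Longrightarrow> clin f"
proof (induction rule: NP.induct)
  case (np_mon r k)
  then show ?case using Ck_clin[of k] by (auto simp: clin_def scaleR_add_right hscale_scaleR)
next
  case (np_add f g)
  then show ?case by (auto simp: clin_def hscale_add_right)
qed

lemma NP_scale: "f \<in> NP \<Longrightarrow> r \<ge> 0 \<Longrightarrow> (\<lambda>x. scaleR r (f x)) \<in> NP"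
proof (induction arbitrary: r rule: NP.induct)
  case (np_mon s k)
  have "(\<lambda>x. scaleR (r * s) ((C ^^ k) x)) \<in> NP" using np_mon by (intro NP.np_mon) simp
  then show ?case by (rule NP_cong) simp
next
  case (np_add f g)
  have "(\<lambda>x. scaleR r (f x) + scaleR r (g x)) \<in> NP" using np_add by (intro NP.np_add) auto
  then show ?case by (rule NP_cong) (simp add: scaleR_add_right)
qed

lemma NP_zero: "(\<lambda>x. 0) \<in> NP"
  using np_mon[of 0 0] by simp

lemma NP_C: "C \<in> NP"
  using np_mon[of 1 1] by simp

lemma NP_id: "(\<lambda>x. x) \<in> NP"
  using np_mon[of 1 0] by simp

lemma NP_comp: "f \<in> NP \<Longrightarrow> g \<in> NP \<Longrightarrow> (\<lambda>x. f (g x)) \<in> NP"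
proof (induction arbitrary: g rule: NP.induct)
  case (np_mon r k)
  from np_mon.prems show ?case
  proof (induction rule: NP.induct)
    case (np_mon s l)
    have "(\<lambda>x. scaleR (r * s) ((C ^^ (k + l)) x)) \<in> NP"
      using \<open>r \<ge> 0\<close> \<open>s \<ge> 0\<close> by (intro NP.np_mon) simp
    then show ?case by (rule NP_cong) (simp add: clin_scaleR[OF Ck_clin] funpow_add)
  next
    case (np_add g1 g2)
    have "(\<lambda>x. scaleR r ((C ^^ k) (g1 x)) + scaleR r ((C ^^ k) (g2 x))) \<in> NP"
      using np_add by (intro NP.np_add)
    then show ?case by (rule NP_cong) (simp add: clinD[OF Ck_clin] scaleR_add_right)
  qed
next
  case (np_add f1 f2)
  show ?case using NP.np_add[OF np_add.IH(1)[OF np_add.prems] np_add.IH(2)[OF np_add.prems]] by simp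
qed

lemma NP_commute_G:
  assumes G: "clin G" "\<And>x. G (C x) = C (G x)" and f: "f \<in> NP"
  shows "f (G x) = G (f x)"
  using f
proof (induction arbitrary: x rule: NP.induct)
  case (np_mon r k)
  have "G ((C ^^ k) x) = (C ^^ k) (G x)" by (rule funpow_comm[where G=G and C=C, OF G(2)])
  then show ?case by (simp add: clin_scaleR[OF G(1)])
next
  case (np_add f g)
  then show ?case by (simp add: clinD[OF G(1)])
qed

lemma NP_comm: assumes f: "f \<in> NP" and g: "g \<in> NP" shows "f (g x) = g (f x)"
proof (rule NP_commute_G[OF NP_clin[OF g] _ f])
  fix y show "g (C y) = C (g y)" by (rule NP_commute_G[OF C_clin _ g]) simp
qed

lemma Ck_sa: "hinner ((C ^^ k) x) y = hinner x ((C ^^ k) y)"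
proof (induction k arbitrary: x y)
  case (Suc k)
  have "hinner ((C ^^ Suc k) x) y = hinner ((C ^^ k) x) (C y)" by (simp add: C_sa)
  also have "\<dots> = hinner x ((C ^^ k) (C y))" by (rule Suc)
  also have "\<dots> = hinner x ((C ^^ Suc k) y)" by (simp add: funpow_Suc_right del: funpow.simps)
  finally show ?case .
qed simp

lemma NP_sa: "f \<in> NP \<Longrightarrow> hinner (f x) y = hinner x (f y)"
proof (induction arbitrary: x y rule: NP.induct)
  case (np_mon r k)
  then show ?case by (simp add: hinner_scaleR_left hinner_scaleR_right Ck_sa)
next
  case (np_add f g)
  then show ?case by (simp add: hinner_add_left hinner_add_right)
qed

lemma Ck_nn: "hinner ((C ^^ k) x) x \<ge> 0"
proof -
  define j where "j = k div 2"
  have "k = 2 * j \<or> k = 2 * j + 1" unfolding j_def by presburger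
  then show ?thesis
  proof
    assume k: "k = 2 * j"
    have "hinner ((C ^^ k) x) x = hinner ((C ^^ j) ((C ^^ j) x)) x" by (simp add: k mult_2 funpow_add)
    also have "\<dots> = hinner ((C ^^ j) x) ((C ^^ j) x)" by (rule Ck_sa)
    finally show ?thesis by (simp only: hinner_self_nonneg)
  next
    assume k: "k = 2 * j + 1"
    have "hinner ((C ^^ k) x) x = hinner ((C ^^ j) (C ((C ^^ j) x))) x"
      by (simp add: k mult_2 funpow_add funpow_Suc_right funpow_swap1 del: funpow.simps)
    also have "\<dots> = hinner (C ((C ^^ j) x)) ((C ^^ j) x)" by (rule Ck_sa)
    finally show ?thesis using C_nn by (simp add: op_nonneg_on_def)
  qed
qed

lemma NP_nn: "f \<in> NP \<Longrightarrow> hinner (f x) x \<ge> 0"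
proof (induction arbitrary: x rule: NP.induct)
  case (np_mon r k)
  have "hinner (scaleR r ((C ^^ k) x)) x = of_real r * hinner ((C ^^ k) x) x" by (rule hinner_scaleR_left)
  then show ?case using Ck_nn[of k x] np_mon by (simp add: nonneg_iff)
next
  case (np_add f g)
  then show ?case by (simp add: hinner_add_left)
qed

lemma NP_nonneg_on: "f \<in> NP \<Longrightarrow> op_nonneg_on UNIV f"
  by (simp add: op_nonneg_on_def NP_nn)

end

locale sqctx1 = sqctx +
  assumes C_le: "\<And>x. Re (hinner (C x) x) \<le> (norm x)^2"
begin

fun Y :: "nat \<Rightarrow> 'a \<Rightarrow> 'a" where
  "Y 0 = (\<lambda>x. 0)"
| "Y (Suc n) = (\<lambda>x. scaleR (1/2) (C x + Y n (Y n x)))"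

lemma Y_Suc: "Y (Suc n) x = scaleR (1/2) (C x + Y n (Y n x))" by simp

declare Y.simps(2)[simp del]

lemma Y_NP: "Y n \<in> NP"
proof (induction n)
  case 0 then show ?case using NP_zero by simp
next
  case (Suc n)
  have "(\<lambda>x. C x + Y n (Y n x)) \<in> NP" by (rule np_add[OF NP_C NP_comp[OF Suc Suc]])
  then have "(\<lambda>x. scaleR (1/2) (C x + Y n (Y n x))) \<in> NP" by (rule NP_scale) simp
  then show ?case by (rule NP_cong) (simp add: Y_Suc)
qed

lemma Y_clin: "clin (Y n)" by (rule NP_clin[OF Y_NP])

lemma Y_comm: "Y n (Y m x) = Y m (Y n x)" by (rule NP_comm[OF Y_NP Y_NP])

lemma Y_diff_NP: "(\<lambda>x. Y (Suc n) x - Y n x) \<in> NP"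
proof (induction n)
  case 0
  have "(\<lambda>x. scaleR (1/2) (C x)) \<in> NP" by (rule NP_scale[OF NP_C]) simp
  then show ?case by (rule NP_cong) (simp add: Y_Suc)
next
  case (Suc n)
  define D where "D = (\<lambda>x. Y (Suc n) x - Y n x)"
  have DNP: "D \<in> NP" using Suc by (simp add: D_def)
  have SNP: "(\<lambda>x. Y (Suc n) x + Y n x) \<in> NP" by (rule np_add[OF Y_NP Y_NP])
  have "(\<lambda>x. scaleR (1/2) (D (Y (Suc n) x + Y n x))) \<in> NP"
    by (rule NP_scale[OF NP_comp[OF DNP SNP]]) simp
  then show ?case
  proof (rule NP_cong)
    fix x
    have "D (Y (Suc n) x + Y n x) = Y (Suc n) (Y (Suc n) x) - Y n (Y n x)"
      unfolding D_def using Y_comm[of n "Suc n" x]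
      by (simp add: clinD[OF Y_clin] algebra_simps)
    have h1: "Y (Suc (Suc n)) x = scaleR (1/2) (C x + Y (Suc n) (Y (Suc n) x))" by (rule Y_Suc)
    have h2: "Y (Suc n) x = scaleR (1/2) (C x + Y n (Y n x))" by (rule Y_Suc)
    have "scaleR (1/2) (D (Y (Suc n) x + Y n x)) = scaleR (1/2) (C x + Y (Suc n) (Y (Suc n) x)) - scaleR (1/2) (C x + Y n (Y n x))"
      unfolding \<open>D (Y (Suc n) x + Y n x) = _\<close> by (simp add: algebra_simps)
    then show "scaleR (1/2) (D (Y (Suc n) x + Y n x)) = Y (Suc (Suc n)) x - Y (Suc n) x"
      by (simp only: h1[symmetric] h2[symmetric])
  qed
qed

lemma Y_le: "Re (hinner (Y n x) x) \<le> (norm x)^2"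
proof (induction n arbitrary: x)
  case 0 then show ?case by simp
next
  case (Suc n)
  have nY: "norm (Y n x) \<le> norm x"
    by (rule nonneg_le_id_norm[OF Y_clin NP_nonneg_on[OF Y_NP]]) (rule Suc)
  have "hinner (Y n (Y n x)) x = hinner (Y n x) (Y n x)" by (rule NP_sa[OF Y_NP])
  then have "Re (hinner (Y n (Y n x)) x) = (norm (Y n x))^2" by (simp add: Re_hinner_self)
  also have "\<dots> \<le> (norm x)^2" using nY by (simp add: power_mono)
  finally have a: "Re (hinner (Y n (Y n x)) x) \<le> (norm x)^2" .
  have "Re (hinner (Y (Suc n) x) x) = (1/2) * (Re (hinner (C x) x) + Re (hinner (Y n (Y n x)) x))"
    by (simp add: Y_Suc hinner_scaleR_left hinner_add_left)
  then show ?case using a C_le[of x] by simp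
qed

lemma Y_norm: "norm (Y n x) \<le> norm x"
  by (rule nonneg_le_id_norm[OF Y_clin NP_nonneg_on[OF Y_NP]]) (rule Y_le)

definition q :: "'a \<Rightarrow> nat \<Rightarrow> real" where "q x n = Re (hinner (Y n x) x)"

lemma Y_diffk_NP: "(\<lambda>x. Y (n + k) x - Y n x) \<in> NP"
proof (induction k)
  case 0 then show ?case using NP_zero by simp
next
  case (Suc k)
  have "(\<lambda>x. (Y (Suc (n + k)) x - Y (n + k) x) + (Y (n + k) x - Y n x)) \<in> NP"
    by (rule np_add[OF Y_diff_NP Suc])
  then show ?case by (rule NP_cong) simp
qed

lemma Y_cauchy_est:
  assumes "n \<le> m" shows "(norm (Y m x - Y n x))^2 \<le> q x m - q x n"
proof -
  obtain k where m: "m = n + k" using assms le_Suc_ex by blast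
  define E where "E = (\<lambda>x. Y (n + k) x - Y n x)"
  have ENP: "E \<in> NP" unfolding E_def by (rule Y_diffk_NP)
  have Ele: "Re (hinner (E z) z) \<le> (norm z)^2" for z
  proof -
    have "Re (hinner (E z) z) = q z (n + k) - q z n" by (simp add: E_def q_def hinner_diff_left)
    moreover have "q z n \<ge> 0" using NP_nn[OF Y_NP, of n z] by (simp add: q_def nonneg_iff)
    moreover have "q z (n + k) \<le> (norm z)^2" unfolding q_def by (rule Y_le)
    ultimately show ?thesis by linarith
  qed
  have "(cmod (hinner (E x) (E x)))^2 \<le> Re (hinner (E x) x) * Re (hinner (E (E x)) (E x))"
    by (rule nonneg_cs[OF NP_clin[OF ENP] NP_nonneg_on[OF ENP]])
  also have "\<dots> \<le> Re (hinner (E x) x) * (norm (E x))^2"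
    by (rule mult_left_mono[OF Ele]) (use NP_nn[OF ENP, of x] in \<open>simp add: nonneg_iff\<close>)
  finally have c0: "(cmod (hinner (E x) (E x)))^2 \<le> Re (hinner (E x) x) * (norm (E x))^2" .
  have e: "cmod (hinner (E x) (E x)) = (norm (E x))^2" by (simp add: hinner_norm norm_power)
  have c: "(norm (E x))^2 * (norm (E x))^2 \<le> Re (hinner (E x) x) * (norm (E x))^2"
    using c0 unfolding e by (simp add: power2_eq_square)
  have "(norm (E x))^2 \<le> Re (hinner (E x) x)"
  proof (cases "norm (E x) = 0")
    case False
    then have "(norm (E x))^2 > 0" by simp
    with c show ?thesis by (rule mult_right_le_imp_le)
  next
    case True then show ?thesis using NP_nn[OF ENP, of x] by (simp add: nonneg_iff)
  qed
  also have "\<dots> = q x m - q x n" by (simp add: E_def q_def m hinner_diff_left)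
  finally show ?thesis by (simp add: E_def m)
qed

lemma q_mono: "incseq (q x)"
proof (rule incseq_SucI)
  fix n
  have "0 \<le> (norm (Y (Suc n) x - Y n x))^2" by simp
  also have "\<dots> \<le> q x (Suc n) - q x n" by (rule Y_cauchy_est) simp
  finally show "q x n \<le> q x (Suc n)" by simp
qed

lemma Y_Cauchy: "Cauchy (\<lambda>n. Y n x)"
proof -
  have qb: "\<forall>i. q x i \<le> (norm x)^2" by (simp add: q_def Y_le)
  obtain L where L: "q x \<longlonglongrightarrow> L"
    using incseq_convergent[OF q_mono qb] by blast
  then have cq: "Cauchy (q x)" by (intro convergent_Cauchy) (auto simp: convergent_def)
  show ?thesis
  proof (rule CauchyI)
    fix e :: real assume e: "e > 0"
    then obtain N where N: "\<And>m n. m \<ge> N \<Longrightarrow> n \<ge> N \<Longrightarrow> norm (q x m - q x n) < e^2"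
      using cq unfolding Cauchy_iff by (meson zero_less_power)
    show "\<exists>N. \<forall>m\<ge>N. \<forall>n\<ge>N. norm (Y m x - Y n x) < e"
    proof (intro exI allI impI)
      fix m n assume mn: "m \<ge> N" "n \<ge> N"
      have "(norm (Y m x - Y n x))^2 < e^2"
      proof (cases "n \<le> m")
        case True
        have "(norm (Y m x - Y n x))^2 \<le> q x m - q x n" by (rule Y_cauchy_est[OF True])
        also have "\<dots> < e^2" using N[OF mn] by simp
        finally show ?thesis .
      next
        case False
        have "(norm (Y m x - Y n x))^2 = (norm (Y n x - Y m x))^2" by (simp add: norm_minus_commute)
        also have "\<dots> \<le> q x n - q x m" by (rule Y_cauchy_est) (use False in simp)
        also have "\<dots> < e^2" using N[OF mn(2,1)] by simp
        finally show ?thesis .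
      qed
      then show "norm (Y m x - Y n x) < e" using e by (simp add: power_less_imp_less_base)
    qed
  qed
qed

definition YL :: "'a \<Rightarrow> 'a" where "YL x = lim (\<lambda>n. Y n x)"

lemma YL_lim: "(\<lambda>n. Y n x) \<longlonglongrightarrow> YL x"
  unfolding YL_def using Y_Cauchy[of x] by (simp add: Cauchy_convergent_iff convergent_LIMSEQ_iff)

lemma YL_clin: "clin YL"
  unfolding clin_def
proof (intro conjI allI)
  fix x y
  have "(\<lambda>n. Y n (x + y)) \<longlonglongrightarrow> YL x + YL y"
    using tendsto_add[OF YL_lim[of x] YL_lim[of y]] by (simp add: clinD[OF Y_clin])
  then show "YL (x + y) = YL x + YL y" using YL_lim[of "x+y"] LIMSEQ_unique by blast
next
  fix a x
  have "(\<lambda>n. Y n (hscale a x)) \<longlonglongrightarrow> hscale a (YL x)"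
    using bounded_linear.tendsto[OF bounded_linear_hscale YL_lim[of x]] by (simp add: clinD[OF Y_clin])
  then show "YL (hscale a x) = hscale a (YL x)" using YL_lim[of "hscale a x"] LIMSEQ_unique by blast
qed

lemma YL_norm: "norm (YL x) \<le> norm x"
  by (rule LIMSEQ_le_const2[OF tendsto_norm[OF YL_lim[of x]]]) (use Y_norm in blast)

lemma YL_bounded: "bounded_op YL"
  by (rule bounded_opI[OF YL_clin, where K=1]) (simp add: YL_norm)

lemma YL_sa: "hinner (YL x) y = hinner x (YL y)"
proof -
  have "(\<lambda>n. hinner (Y n x) y) \<longlonglongrightarrow> hinner (YL x) y" by (intro tendsto_hinner YL_lim tendsto_const)
  moreover have "(\<lambda>n. hinner (Y n x) y) \<longlonglongrightarrow> hinner x (YL y)"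
    unfolding NP_sa[OF Y_NP] by (intro tendsto_hinner YL_lim tendsto_const)
  ultimately show ?thesis using LIMSEQ_unique by blast
qed

lemma YL_form: "Re (hinner (YL x) x) \<ge> 0" "Im (hinner (YL x) x) = 0" "Re (hinner (YL x) x) \<le> (norm x)^2"
proof -
  have l: "(\<lambda>n. hinner (Y n x) x) \<longlonglongrightarrow> hinner (YL x) x" by (intro tendsto_hinner YL_lim tendsto_const)
  have lr: "(\<lambda>n. Re (hinner (Y n x) x)) \<longlonglongrightarrow> Re (hinner (YL x) x)" by (rule tendsto_Re[OF l])
  have li: "(\<lambda>n. Im (hinner (Y n x) x)) \<longlonglongrightarrow> Im (hinner (YL x) x)" by (rule tendsto_Im[OF l])
  have nn: "Re (hinner (Y n x) x) \<ge> 0" "Im (hinner (Y n x) x) = 0" for n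
    using NP_nn[OF Y_NP, of n x] by (auto simp: nonneg_iff)
  show "Re (hinner (YL x) x) \<ge> 0" by (rule LIMSEQ_le_const[OF lr]) (use nn in blast)
  show "Re (hinner (YL x) x) \<le> (norm x)^2" by (rule LIMSEQ_le_const2[OF lr]) (use Y_le in blast)
  have "(\<lambda>n. Im (hinner (Y n x) x)) = (\<lambda>n. 0)" using nn(2) by simp
  with li have "(\<lambda>n. 0::real) \<longlonglongrightarrow> Im (hinner (YL x) x)" by simp
  then show "Im (hinner (YL x) x) = 0" by (rule LIMSEQ_unique[OF tendsto_const, symmetric])
qed

lemma YL_YL: "(\<lambda>n. Y n (Y n x)) \<longlonglongrightarrow> YL (YL x)"
proof -
  have "(\<lambda>n. Y n (Y n x - YL x)) \<longlonglongrightarrow> 0"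
  proof (rule tendsto_norm_zero_cancel)
    have "(\<lambda>n. Y n x - YL x) \<longlonglongrightarrow> 0" using YL_lim[of x] by (simp add: LIM_zero)
    then have z: "(\<lambda>n. norm (Y n x - YL x)) \<longlonglongrightarrow> 0" by (rule tendsto_norm_zero)
    show "(\<lambda>n. norm (Y n (Y n x - YL x))) \<longlonglongrightarrow> 0"
      by (rule Lim_null_comparison[OF _ z]) (simp add: Y_norm)
  qed
  then have "(\<lambda>n. Y n (Y n x - YL x) + Y n (YL x)) \<longlonglongrightarrow> 0 + YL (YL x)"
    by (intro tendsto_add YL_lim)
  then show ?thesis by (simp add: clin_diff[OF Y_clin])
qed

lemma YL_fix: "YL x = scaleR (1/2) (C x + YL (YL x))"
proof -
  have "(\<lambda>n. Y (Suc n) x) \<longlonglongrightarrow> YL x" by (rule LIMSEQ_Suc[OF YL_lim])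
  moreover have "(\<lambda>n. Y (Suc n) x) \<longlonglongrightarrow> scaleR (1/2) (C x + YL (YL x))"
    by (simp only: Y_Suc) (intro tendsto_intros YL_YL)
  ultimately show ?thesis using LIMSEQ_unique by blast
qed

lemma YL_comm:
  assumes G: "bounded_op G" "\<And>x. G (C x) = C (G x)"
  shows "G (YL x) = YL (G x)"
proof -
  have "(\<lambda>n. G (Y n x)) \<longlonglongrightarrow> G (YL x)"
    by (rule bounded_linear.tendsto[OF bounded_op_bounded_linear[OF G(1)] YL_lim])
  moreover have "G (Y n x) = Y n (G x)" for n
    by (rule NP_commute_G[OF bounded_op_clin[OF G(1)] G(2) Y_NP, symmetric])
  ultimately have "(\<lambda>n. Y n (G x)) \<longlonglongrightarrow> G (YL x)" by simp
  then show ?thesis using YL_lim LIMSEQ_unique by blast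
qed

end

lemma sqrt_exists:
  fixes A :: "'a::complex_hilbert \<Rightarrow> 'a"
  assumes A: "bounded_op A" "op_nonneg_on UNIV A"
  shows "\<exists>R. bounded_op R \<and> op_nonneg_on UNIV R \<and> (\<forall>x. R (R x) = A x) \<and>
           (\<forall>G. bounded_op G \<longrightarrow> (\<forall>x. G (A x) = A (G x)) \<longrightarrow> (\<forall>x. G (R x) = R (G x)))"
proof -
  have Acl: "clin A" by (rule bounded_op_clin[OF A(1)])
  obtain K where K: "K \<ge> 0" "\<And>x. norm (A x) \<le> K * norm x" using bounded_op_K[OF A(1)] by blast
  define L where "L = K + 1"
  have L: "L > 0" using K by (simp add: L_def)
  define C where "C x = x - scaleR (1/L) (A x)" for x
  have Cf: "hinner (C x) y = hinner x y - of_real (1/L) * hinner (A x) y" for x y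
    by (simp add: C_def hinner_diff_left hinner_scaleR_left)
  have Aform: "Re (hinner (A x) x) \<ge> 0" "Im (hinner (A x) x) = 0" for x
    using A(2) by (auto simp: op_nonneg_on_def nonneg_iff)
  have Ale: "Re (hinner (A x) x) \<le> L * (norm x)^2" for x
  proof -
    have "Re (hinner (A x) x) \<le> cmod (hinner (A x) x)" by (rule complex_Re_le_cmod)
    also have "\<dots> \<le> norm (A x) * norm x" by (rule hinner_cs)
    also have "\<dots> \<le> K * norm x * norm x" by (rule mult_right_mono[OF K(2)]) simp
    also have "\<dots> \<le> L * (norm x)^2" by (simp add: L_def power2_eq_square ring_distribs mult.assoc)
    finally show ?thesis .
  qed
  have ReC: "Re (hinner (C x) x) = (norm x)^2 - (1/L) * Re (hinner (A x) x)" for x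
    by (simp add: Cf Re_hinner_self)
  interpret sqctx1 C
  proof
    show "clin C" unfolding clin_def C_def
      by (simp add: clinD[OF Acl] hscale_add_right hscale_diff_right hscale_scaleR algebra_simps)
    show "hinner (C x) y = hinner x (C y)" for x y
      unfolding Cf by (simp add: C_def hinner_diff_right hinner_scaleR_right nonneg_selfadj[OF Acl A(2)])
    show "op_nonneg_on UNIV C"
      unfolding op_nonneg_on_def nonneg_iff
    proof (intro ballI conjI)
      fix x
      have "(1/L) * Re (hinner (A x) x) \<le> (1/L) * (L * (norm x)^2)"
        using Ale[of x] L by (intro mult_left_mono) auto
      then show "0 \<le> Re (hinner (C x) x)" using L by (simp add: ReC)
      show "Im (hinner (C x) x) = 0" by (simp add: Cf Im_hinner_self Aform)
    qed
    show "Re (hinner (C x) x) \<le> (norm x)^2" for x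
      using Aform(1)[of x] L by (simp add: ReC)
  qed
  define R0 where "R0 x = x - YL x" for x
  define R where "R x = scaleR (sqrt L) (R0 x)" for x
  have R0R0: "R0 (R0 x) = scaleR (1/L) (A x)" for x
  proof -
    have f: "YL (YL x) = scaleR 2 (YL x) - C x" using YL_fix[of x]
      by (simp add: algebra_simps scaleR_2) (metis add_diff_cancel_left' scaleR_2 scaleR_add_right scaleR_half_double)
    show ?thesis unfolding R0_def clin_diff[OF YL_clin] f by (simp add: C_def algebra_simps scaleR_2)
  qed
  have R0cl: "clin R0" using YL_clin unfolding clin_def R0_def by (simp add: hscale_diff_right algebra_simps)
  have RR: "R (R x) = A x" for x
  proof -
    have "R (R x) = scaleR (sqrt L * sqrt L) (R0 (R0 x))"
      unfolding R_def clin_scaleR[OF R0cl] by simp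
    also have "\<dots> = A x" using L by (simp add: R0R0)
    finally show ?thesis .
  qed
  have Rcl: "clin R" using R0cl unfolding clin_def R_def by (simp add: hscale_scaleR scaleR_add_right)
  have Rb: "bounded_op R"
  proof (rule bounded_opI[OF Rcl, where K="sqrt L * 2"])
    fix x
    have "norm (R0 x) \<le> norm x + norm (YL x)" unfolding R0_def by (rule norm_triangle_ineq4)
    also have "\<dots> \<le> 2 * norm x" using YL_norm[of x] by simp
    finally show "norm (R x) \<le> sqrt L * 2 * norm x" unfolding R_def using L
      by (simp add: mult_left_mono)
  qed
  have Rnn: "op_nonneg_on UNIV R"
    unfolding op_nonneg_on_def nonneg_iff
  proof (intro ballI conjI)
    fix x
    have h: "hinner (R x) x = of_real (sqrt L) * (hinner x x - hinner (YL x) x)"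
      by (simp add: R_def R0_def hinner_scaleR_left hinner_diff_left)
    show "0 \<le> Re (hinner (R x) x)" using YL_form(3)[of x] L by (simp add: h Re_hinner_self)
    show "Im (hinner (R x) x) = 0" using YL_form(2)[of x] by (simp add: h Im_hinner_self)
  qed
  have Rcomm: "G (R x) = R (G x)" if G: "bounded_op G" "\<forall>x. G (A x) = A (G x)" for G x
  proof -
    have Gcl: "clin G" by (rule bounded_op_clin[OF G(1)])
    have "G (C y) = C (G y)" for y using G(2) by (simp add: C_def clin_diff[OF Gcl] clin_scaleR[OF Gcl])
    then have "G (YL y) = YL (G y)" for y by (rule YL_comm[OF G(1)])
    then show ?thesis by (simp add: R_def R0_def clin_diff[OF Gcl] clin_scaleR[OF Gcl])
  qed
  show ?thesis using Rb Rnn RR Rcomm by blast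
qed

lemma sqrt_unique:
  fixes A R B :: "'a::complex_hilbert \<Rightarrow> 'a"
  assumes R: "bounded_op R" "op_nonneg_on UNIV R" "\<And>x. R (R x) = A x"
    "\<And>G. bounded_op G \<Longrightarrow> (\<forall>x. G (A x) = A (G x)) \<Longrightarrow> (\<forall>x. G (R x) = R (G x))"
  and B: "bounded_op B" "op_nonneg_on UNIV B" "\<And>x. B (B x) = A x"
  shows "B x = R x"
proof -
  have Bcl: "clin B" and Rcl: "clin R" using B(1) R(1) by (auto simp: bounded_op_clin)
  have "\<forall>x. B (A x) = A (B x)" by (simp flip: B(3))
  then have BR: "B (R y) = R (B y)" for y using R(4)[OF B(1)] by blast
  define w where "w = B x - R x"
  have "B w + R w = 0"
    unfolding w_def clin_diff[OF Bcl] clin_diff[OF Rcl] B(3) R(3) BR by simp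
  then have "hinner (B w) w + hinner (R w) w = 0" by (simp flip: hinner_add_left)
  moreover have "Re (hinner (B w) w) \<ge> 0" "Re (hinner (R w) w) \<ge> 0"
    using B(2) R(2) by (auto simp: op_nonneg_on_def nonneg_iff)
  ultimately have "Re (hinner (B w) w) = 0" "Re (hinner (R w) w) = 0"
    by (metis add_nonneg_eq_0_iff plus_complex.sel(1) zero_complex.sel(1))+
  then have Bw: "B w = 0" and Rw: "R w = 0"
    using nonneg_zero[OF Bcl B(2)] nonneg_zero[OF Rcl R(2)] by auto
  have "hinner w w = hinner x (B w) - hinner x (R w)"
    unfolding w_def[of] hinner_diff_left nonneg_selfadj[OF Bcl B(2)] nonneg_selfadj[OF Rcl R(2)]
    by (simp add: w_def)
  then have "hinner w w = 0" by (simp add: Bw Rw)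
  then show ?thesis by (simp add: hinner_self_eq_0 w_def)
qed

lemma op_sqrt_char:
  fixes A :: "'a::complex_hilbert \<Rightarrow> 'a"
  assumes A: "bounded_op A" "op_nonneg_on UNIV A"
  shows "bounded_op (op_sqrt A) \<and> op_nonneg_on UNIV (op_sqrt A) \<and> (\<forall>x. op_sqrt A (op_sqrt A x) = A x)"
proof -
  obtain R where R: "bounded_op R" "op_nonneg_on UNIV R" "\<And>x. R (R x) = A x"
    "\<And>G. bounded_op G \<Longrightarrow> (\<forall>x. G (A x) = A (G x)) \<Longrightarrow> (\<forall>x. G (R x) = R (G x))"
    using sqrt_exists[OF A] by blast
  have ex: "\<exists>!B. bounded_op B \<and> op_nonneg_on UNIV B \<and> (\<forall>x. B (B x) = A x)"
  proof (rule ex1I[of _ R])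
    show "bounded_op R \<and> op_nonneg_on UNIV R \<and> (\<forall>x. R (R x) = A x)" using R by blast
    fix B assume B: "bounded_op B \<and> op_nonneg_on UNIV B \<and> (\<forall>x. B (B x) = A x)"
    show "B = R"
    proof
      fix x show "B x = R x" by (rule sqrt_unique[OF R]) (use B in auto)
    qed
  qed
  show ?thesis unfolding op_sqrt_def by (rule theI'[OF ex])
qed

lemma complex_of_real_le0: "complex_of_real r \<le> 0 \<longleftrightarrow> r \<le> 0"
  by (simp add: less_eq_complex_def)
lemma complex_of_real_ge0: "complex_of_real r \<ge> 0 \<longleftrightarrow> r \<ge> 0"
  by (simp add: less_eq_complex_def)

lemma funpow_in:
  assumes "\<And>u. u \<in> M \<Longrightarrow> A u \<in> M" "u \<in> M" shows "(A ^^ j) u \<in> M"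
  by (induction j) (auto intro: assms)

lemma adj_funpow_on:
  fixes A A' :: "'a::complex_hilbert \<Rightarrow> 'a"
  assumes A: "\<And>u. u \<in> M \<Longrightarrow> A u \<in> M" and A': "\<And>u. u \<in> M \<Longrightarrow> A' u \<in> M"
    and h: "\<And>u w. u \<in> M \<Longrightarrow> w \<in> M \<Longrightarrow> hinner (A' u) w = hinner u (A w)"
  shows "u \<in> M \<Longrightarrow> v \<in> M \<Longrightarrow> hinner ((A' ^^ j) u) v = hinner u ((A ^^ j) v)"
proof (induction j arbitrary: u)
  case 0 then show ?case by simp
next
  case (Suc j)
  have "hinner ((A' ^^ Suc j) u) v = hinner ((A' ^^ j) (A' u)) v" by (simp add: funpow_Suc_right del: funpow.simps)
  also have "\<dots> = hinner (A' u) ((A ^^ j) v)" by (rule Suc.IH[OF A'[OF Suc.prems(1)] Suc.prems(2)])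
  also have "\<dots> = hinner u (A ((A ^^ j) v))" by (rule h[OF Suc.prems(1) funpow_in[OF A Suc.prems(2)]])
  finally show ?case by simp
qed

lemma Bop_form:
  fixes A :: "'a::complex_hilbert \<Rightarrow> 'a"
  assumes A: "\<And>u. u \<in> M \<Longrightarrow> A u \<in> M" and A': "\<And>u. u \<in> M \<Longrightarrow> adj_on M A u \<in> M"
    and h: "\<And>u w. u \<in> M \<Longrightarrow> w \<in> M \<Longrightarrow> hinner (adj_on M A u) w = hinner u (A w)"
    and y: "y \<in> M"
  shows "hinner (Bop M A n y) y = of_real (\<Sum>j\<le>n. (-1)^j * real (n choose j) * (norm ((A ^^ j) y))^2)"
proof -
  have e: "hinner ((adj_on M A ^^ j) ((A ^^ j) y)) y = of_real ((norm ((A ^^ j) y))^2)" for j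
    using adj_funpow_on[OF A A' h funpow_in[OF A y] y, where j=j] by (simp add: hinner_norm)
  show ?thesis
    unfolding Bop_def hinner_sum_left hinner_hscale_left e by simp
qed

lemma fin_diff:
  fixes a :: "nat \<Rightarrow> real"
  shows "(\<Sum>j\<le>Suc n. (-1)^j * real (Suc n choose j) * a j) = - (\<Sum>j\<le>n. (-1)^j * real (n choose j) * (a (Suc j) - a j))"
proof -
  define f where "f j = (-1)^j * real (n choose j) * a j" for j
  have s1: "(\<Sum>j\<le>n. f (Suc j)) = (\<Sum>j\<le>n. f j) - f 0"
  proof -
    have "(\<Sum>j\<le>Suc n. f j) = (\<Sum>j\<le>n. f (Suc j)) + f 0" by (rule sum.atMost_Suc_shift[THEN trans]) simp
    moreover have "(\<Sum>j\<le>Suc n. f j) = (\<Sum>j\<le>n. f j)" by (simp add: f_def)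
    ultimately show ?thesis by simp
  qed
  have "(\<Sum>j\<le>Suc n. (-1)^j * real (Suc n choose j) * a j)
      = a 0 + (\<Sum>j\<le>n. (-1)^(Suc j) * real (Suc n choose Suc j) * a (Suc j))"
    by (subst sum.atMost_Suc_shift) simp
  also have "\<dots> = a 0 + (\<Sum>j\<le>n. - ((-1)^j * real (n choose j) * a (Suc j)) + f (Suc j))"
    by (simp add: f_def algebra_simps)
  also have "\<dots> = a 0 - (\<Sum>j\<le>n. (-1)^j * real (n choose j) * a (Suc j)) + (\<Sum>j\<le>n. f (Suc j))"
    by (simp add: sum.distrib sum_negf sum_subtractf)
  also have "\<dots> = - (\<Sum>j\<le>n. (-1)^j * real (n choose j) * a (Suc j)) + (\<Sum>j\<le>n. f j)"
    unfolding s1 by (simp add: f_def[of 0])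
  also have "\<dots> = - (\<Sum>j\<le>n. (-1)^j * real (n choose j) * (a (Suc j) - a j))"
    by (simp add: f_def algebra_simps sum_subtractf)
  finally show ?thesis .
qed

lemma concave_seq:
  fixes a :: "nat \<Rightarrow> real"
  assumes c: "\<And>n. a (Suc (Suc n)) - 2 * a (Suc n) + a n \<le> 0" and p: "\<And>n. a n \<ge> 0"
  shows "a 0 \<le> a 1"
proof (rule ccontr)
  assume "\<not> a 0 \<le> a 1"
  define d where "d = a 1 - a 0"
  have d: "d < 0" using \<open>\<not> a 0 \<le> a 1\<close> by (simp add: d_def)
  have dd: "a (Suc n) - a n \<le> d" for n
  proof (induction n)
    case 0 then show ?case by (simp add: d_def)
  next
    case (Suc n) then show ?case using c[of n] by simp
  qed
  have an: "a n \<le> a 0 + real n * d" for n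
  proof (induction n)
    case 0 then show ?case by simp
  next
    case (Suc n) then show ?case using dd[of n] by (simp add: algebra_simps)
  qed
  obtain n :: nat where n: "a 0 / (- d) < n" using reals_Archimedean2 by blast
  then have "a 0 < real n * (- d)" using d by (simp add: field_simps)
  then have "a n < 0" using an[of n] by simp
  then show False using p[of n] by simp
qed

lemma bounded_linear_funpow: "bounded_linear (f::'a::real_normed_vector \<Rightarrow> 'a) \<Longrightarrow> bounded_linear (f ^^ j)"
proof (induction j)
  case 0
  show ?case unfolding funpow.simps(1) id_def by (rule bounded_linear_ident)
next
  case (Suc j)
  have "bounded_linear (\<lambda>x. f ((f ^^ j) x))" by (rule bounded_linear_compose[OF Suc.prems Suc.IH[OF Suc.prems]])
  then show ?case by (simp add: comp_def)
qed

theorem proposition3p3: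
  fixes T :: "'a::complex_hilbert \<Rightarrow> 'a" and m :: nat
  assumes "bounded_op T"
    and "Delta_regular T"
    and "concave_op T"
    and "m \<ge> 2"
  shows "m_hyperexpansive m T \<longleftrightarrow>
         m_hypercontraction_on (closure (range (Delta T))) (m - 1)
           (compression (closure (range (Delta T))) T)"
proof -
  note T = assms(1)
  define D where "D = Delta T"
  have Dx: "D x = adj T (T x) - x" for x by (simp add: D_def Delta_def)
  have Tcl: "clin T" by (rule bounded_op_clin[OF T])
  have adjb: "bounded_op (adj T)" by (rule adj_bounded[OF T])
  have adjcl: "clin (adj T)" by (rule bounded_op_clin[OF adjb])
  have Dcl: "clin D" unfolding clin_def Dx by (simp add: clinD[OF Tcl] clinD[OF adjcl] hscale_diff_right)
  obtain K1 where K1: "K1 \<ge> 0" "\<And>x. norm (T x) \<le> K1 * norm x" using bounded_op_K[OF T] by blast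
  obtain K2 where K2: "K2 \<ge> 0" "\<And>x. norm (adj T x) \<le> K2 * norm x" using bounded_op_K[OF adjb] by blast
  have Db: "bounded_op D"
  proof (rule bounded_opI[OF Dcl, where K="K2 * K1 + 1"])
    fix x
    have "norm (D x) \<le> norm (adj T (T x)) + norm x" unfolding Dx by (rule norm_triangle_ineq4)
    also have "norm (adj T (T x)) \<le> K2 * (K1 * norm x)"
      using K2(2)[of "T x"] mult_left_mono[OF K1(2)[of x] K2(1)] by linarith
    finally show "norm (D x) \<le> (K2 * K1 + 1) * norm x" by (simp add: algebra_simps)
  qed
  have Dform: "hinner (D x) y = hinner (T x) (T y) - hinner x y" for x y
    unfolding Dx hinner_diff_left adj_char2[OF T] ..
  have Dsa: "hinner (D x) y = hinner x (D y)" for x y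
  proof -
    have "hinner (D x) y = hinner (T x) (T y) - hinner x y" by (rule Dform)
    also have "\<dots> = hinner x (D y)" unfolding Dx hinner_diff_right adj_char[OF T] ..
    finally show ?thesis .
  qed
  have powform: "hinner ((adj T ^^ j) ((T ^^ j) x)) x = of_real ((norm ((T ^^ j) x))^2)" for j x
    using adj_funpow[OF T, of j "(T ^^ j) x" x] by (simp add: hinner_norm)
  \<comment> \<open>concavity gives positivity of the defect operator\<close>
  have concx: "(norm ((T ^^ 2) x))^2 - 2 * (norm (T x))^2 + (norm x)^2 \<le> 0" for x
  proof -
    have "hinner ((adj T ^^ 2) ((T ^^ 2) x) - hscale 2 (adj T (T x)) + x) x \<le> 0"
      using assms(3) by (simp add: concave_op_def op_nonpos_on_def)
    moreover have "hinner ((adj T ^^ 2) ((T ^^ 2) x) - hscale 2 (adj T (T x)) + x) x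
       = of_real ((norm ((T ^^ 2) x))^2 - 2 * (norm (T x))^2 + (norm x)^2)"
      unfolding hinner_add_left hinner_diff_left hinner_hscale_left powform adj_char2[OF T]
      by (simp add: hinner_norm)
    ultimately show ?thesis by (simp only: complex_of_real_le0)
  qed
  have Dnn: "op_nonneg_on UNIV D"
    unfolding op_nonneg_on_def
  proof
    fix x :: 'a
    define a where "a n = (norm ((T ^^ n) x))^2" for n
    have "a 0 \<le> a 1"
    proof (rule concave_seq)
      fix n
      have e2: "(T ^^ 2) ((T ^^ n) x) = (T ^^ Suc (Suc n)) x"
        by (simp add: numeral_2_eq_2)
      show "a (Suc (Suc n)) - 2 * a (Suc n) + a n \<le> 0"
        using concx[of "(T ^^ n) x"] unfolding a_def e2 by simp
    qed (simp add: a_def)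
    then have "(norm x)^2 \<le> (norm (T x))^2" by (simp add: a_def)
    moreover have eqD: "hinner (D x) x = of_real ((norm (T x))^2 - (norm x)^2)"
      by (simp add: Dform hinner_norm)
    ultimately show "hinner (D x) x \<ge> 0" unfolding eqD complex_of_real_ge0 by simp
  qed
  define S where "S = op_sqrt D"
  have Sb: "bounded_op S" and Snn: "op_nonneg_on UNIV S" and SS: "\<And>x. S (S x) = D x"
    using op_sqrt_char[OF Db Dnn] by (auto simp: S_def)
  have Scl: "clin S" by (rule bounded_op_clin[OF Sb])
  have Ssa: "hinner (S x) y = hinner x (S y)" for x y by (rule nonneg_selfadj[OF Scl Snn])
  have reg: "D (T x) = S (T (S x))" for x using assms(2) by (simp add: Delta_regular_def D_def S_def)
  define M where "M = closure (range D)"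
  have Mc: "closed_csubspace M" unfolding M_def by (rule closed_csubspace_range_closure[OF Dcl])
  have DM: "D v \<in> M" for v unfolding M_def by (rule subsetD[OF closure_subset rangeI])
  define P where "P = proj M"
  have orth: "P w = 0" if Sw: "S w = 0" for w
  proof -
    have "range D \<subseteq> {m. hinner w m = 0}"
    proof
      fix m assume "m \<in> range D"
      then obtain v where v: "m = D v" by blast
      have "hinner w (D v) = hinner (D w) v" by (rule Dsa[symmetric])
      also have "\<dots> = 0" unfolding SS[symmetric] Sw clin_zero[OF Scl] by simp
      finally show "m \<in> {m. hinner w m = 0}" using v by simp
    qed
    moreover have "closed {m. hinner w m = 0}"
      by (rule closed_Collect_eq[OF linear_continuous_on[OF bounded_bilinear.bounded_linear_right[OF bounded_bilinear_hinner]] continuous_on_const])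
    ultimately have sub: "M \<subseteq> {m. hinner w m = 0}" unfolding M_def by (rule closure_minimal)
    have M0: "0 \<in> M" using Mc by (simp add: closed_csubspace_def)
    show ?thesis unfolding P_def
    proof (rule proj_eqI[OF Mc M0])
      fix y assume "y \<in> M" then show "hinner (w - 0) y = 0" using sub by auto
    qed
  qed
  have SM: "S y \<in> M" for y
  proof -
    define q where "q = S y - P (S y)"
    have PSy: "P (S y) \<in> M" unfolding P_def by (rule proj_in[OF Mc])
    have qM: "hinner q u = 0" if "u \<in> M" for u unfolding q_def P_def by (rule proj_char(2)[OF Mc that])
    have "D q = 0"
    proof (rule hinner_eq_all_left)
      fix z show "hinner (D q) z = hinner 0 z" using qM[OF DM[of z]] by (simp add: Dsa)
    qed
    then have "hinner (S q) (S q) = 0" using Ssa[of "S q" q] by (simp add: SS)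
    then have Sq: "S q = 0" by (simp add: hinner_self_eq_0)
    have h0: "hinner q q = hinner (S y) q - hinner (P (S y)) q" unfolding q_def by (rule hinner_diff_left)
    have h1: "hinner (S y) q = 0" using Ssa[of y q] Sq by simp
    have h2: "hinner (P (S y)) q = 0" using qM[OF PSy] hinner_sym[of "P (S y)" q] by simp
    have "hinner q q = 0" using h0 h1 h2 by simp
    then have "q = 0" by (simp add: hinner_self_eq_0)
    then have "S y = P (S y)" by (simp add: q_def)
    then show ?thesis using PSy by simp
  qed
  define Th where "Th = compression M T"
  have M0: "0 \<in> M" using Mc by (simp add: closed_csubspace_def)
  have Th_in: "Th u \<in> M" for u
    unfolding Th_def compression_def using proj_in[OF Mc, of "T u"] M0 by simp
  have ThM: "u \<in> M \<Longrightarrow> Th u = P (T u)" for u by (simp add: Th_def compression_def P_def)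
  have Pcl: "clin P" unfolding P_def by (rule proj_clin[OF Mc])
  have key: "S (T x) = Th (S x)" for x
  proof -
    define w where "w = S (T x) - T (S x)"
    have "S w = 0" unfolding w_def clin_diff[OF Scl] SS reg by simp
    then have "P w = 0" by (rule orth)
    then have "P (S (T x)) = P (T (S x))" unfolding w_def clin_diff[OF Pcl] by simp
    moreover have "P (S (T x)) = S (T x)" unfolding P_def by (rule proj_id[OF Mc SM])
    ultimately show ?thesis using ThM[OF SM[of x]] by simp
  qed
  have keyj: "S ((T ^^ j) x) = (Th ^^ j) (S x)" for j x
    by (induction j) (simp_all add: key)
  have adjTh: "adj_on M Th u = P (adj T u)" if "u \<in> M" for u
  proof (rule adj_on_eqI[OF Mc _ _ that])
    show "P (adj T y) \<in> M" for y unfolding P_def by (rule proj_in[OF Mc])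
    fix x y assume xy: "x \<in> M" "y \<in> M"
    show "hinner (Th x) y = hinner x (P (adj T y))"
      unfolding ThM[OF xy(1)] P_def proj_hinner_left[OF Mc xy(2)] proj_hinner_right[OF Mc xy(1)]
      by (rule adj_char[OF T])
  qed
  have formH: "hinner (Bop M Th n y) y = of_real (\<Sum>j\<le>n. (-1)^j * real (n choose j) * (norm ((Th ^^ j) y))^2)"
    if "y \<in> M" for n y
  proof (rule Bop_form[OF _ _ _ that])
    show "Th u \<in> M" for u by (rule Th_in)
    show "adj_on M Th u \<in> M" if "u \<in> M" for u unfolding adjTh[OF that] P_def by (rule proj_in[OF Mc])
    fix u w assume uw: "u \<in> M" "w \<in> M"
    show "hinner (adj_on M Th u) w = hinner u (Th w)"
      unfolding adjTh[OF uw(1)] ThM[OF uw(2)] P_def proj_hinner_left[OF Mc uw(2)] proj_hinner_right[OF Mc uw(1)]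
      by (rule adj_char2[OF T])
  qed
  have formT: "hinner (Bop UNIV T n x) x = of_real (\<Sum>j\<le>n. (-1)^j * real (n choose j) * (norm ((T ^^ j) x))^2)"
    for n x
    by (rule Bop_form) (auto simp: adj_char2[OF T])
  define QT where "QT n x = (\<Sum>j\<le>n. (-1)^j * real (n choose j) * (norm ((T ^^ j) x))^2)" for n x
  define QH where "QH n y = (\<Sum>j\<le>n. (-1)^j * real (n choose j) * (norm ((Th ^^ j) y))^2)" for n y
  have rel: "QT (Suc n) x = - QH n (S x)" for n x
  proof -
    have d: "(norm ((T ^^ Suc j) x))^2 - (norm ((T ^^ j) x))^2 = (norm ((Th ^^ j) (S x)))^2" for j
    proof -
      define u where "u = (T ^^ j) x"
      have "(norm (S u))^2 = Re (hinner (S u) (S u))" by (simp add: Re_hinner_self)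
      also have "\<dots> = Re (hinner (D u) u)" using Ssa[of "S u" u] by (simp add: SS)
      also have "\<dots> = (norm (T u))^2 - (norm u)^2" by (simp add: Dform Re_hinner_self)
      finally show ?thesis by (simp add: u_def keyj)
    qed
    show ?thesis unfolding QT_def QH_def fin_diff d ..
  qed
  have QH0: "QH 0 y = (norm y)^2" for y by (simp add: QH_def)
  have LHS: "m_hyperexpansive m T \<longleftrightarrow> (\<forall>n. 1 \<le> n \<and> n \<le> m \<longrightarrow> (\<forall>x. QT n x \<le> 0))"
    unfolding m_hyperexpansive_def op_nonpos_on_def formT QT_def complex_of_real_le0 by simp
  have formH': "hinner (Bop M Th n y) y = of_real (QH n y)" if "y \<in> M" for n y
    unfolding QH_def by (rule formH[OF that])
  have eqH: "op_nonneg_on M (Bop M Th n) \<longleftrightarrow> (\<forall>y\<in>M. QH n y \<ge> 0)" for n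
    unfolding op_nonneg_on_def
    by (intro ball_cong refl) (simp only: formH' complex_of_real_ge0)
  have RHS: "m_hypercontraction_on M (m - 1) Th \<longleftrightarrow> (\<forall>n. 1 \<le> n \<and> n \<le> m - 1 \<longrightarrow> (\<forall>y\<in>M. QH n y \<ge> 0))"
    unfolding m_hypercontraction_on_def eqH ..
  define Hc where "Hc u = P (T u)" for u
  have Hcb: "bounded_linear Hc"
    unfolding Hc_def P_def
    using bounded_linear_compose[OF bounded_op_bounded_linear[OF proj_bounded[OF Mc]] bounded_op_bounded_linear[OF T]] .
  have ThHc: "(Th ^^ j) y = (Hc ^^ j) y" if "y \<in> M" for j y
  proof (induction j)
    case (Suc j)
    have "(Th ^^ j) y \<in> M" by (rule funpow_in[OF _ that]) (rule Th_in)
    then show ?case using Suc by (simp add: ThM Hc_def)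
  qed simp
  define QH' where "QH' n y = (\<Sum>j\<le>n. (-1)^j * real (n choose j) * (norm ((Hc ^^ j) y))^2)" for n y
  have QHM: "QH n y = QH' n y" if "y \<in> M" for n y unfolding QH_def QH'_def ThHc[OF that] ..
  have QH'c: "continuous_on UNIV (QH' n)" for n
  proof -
    have cj: "continuous_on UNIV (\<lambda>y. (Hc ^^ j) y)" for j
      by (rule linear_continuous_on[OF bounded_linear_funpow[OF Hcb]])
    show ?thesis unfolding QH'_def by (intro continuous_intros cj)
  qed
  have MS: "M \<subseteq> closure (range S)"
  proof -
    have "range D \<subseteq> range S" using SS by (metis image_subsetI rangeI)
    then show ?thesis unfolding M_def by (rule closure_mono)
  qed
  show ?thesis
    unfolding D_def[symmetric] M_def[symmetric] Th_def[symmetric] LHS RHS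
  proof (intro iffI allI impI ballI)
    fix n y assume H: "\<forall>n. 1 \<le> n \<and> n \<le> m \<longrightarrow> (\<forall>x. QT n x \<le> 0)" and n: "1 \<le> n \<and> n \<le> m - 1" and y: "y \<in> M"
    have "range S \<subseteq> {y. 0 \<le> QH' n y}"
    proof
      fix z assume "z \<in> range S"
      then obtain x where z: "z = S x" by blast
      have "QT (Suc n) x \<le> 0" using H n by auto
      then have "0 \<le> QH n (S x)" using rel[of n x] by simp
      then show "z \<in> {y. 0 \<le> QH' n y}" using QHM[OF SM[of x]] z by simp
    qed
    moreover have "closed {y. 0 \<le> QH' n y}" by (rule closed_Collect_le[OF continuous_on_const QH'c])
    ultimately have "closure (range S) \<subseteq> {y. 0 \<le> QH' n y}" by (rule closure_minimal)
    then have "0 \<le> QH' n y" using MS y by blast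
    then show "0 \<le> QH n y" using QHM[OF y] by simp
  next
    fix n x assume H: "\<forall>n. 1 \<le> n \<and> n \<le> m - 1 \<longrightarrow> (\<forall>y\<in>M. 0 \<le> QH n y)" and n: "1 \<le> n \<and> n \<le> m"
    then obtain k where k: "n = Suc k" by (cases n) auto
    show "QT n x \<le> 0"
    proof (cases k)
      case 0 then show ?thesis using rel[of 0 x] by (simp add: k QH0)
    next
      case (Suc k')
      then have "0 \<le> QH k (S x)" using H n k SM[of x] by auto
      then show ?thesis using rel[of k x] by (simp add: k)
    qed
  qed
qed

end
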